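(* With the notation below, for every nonzero triple labeling $J:\mathcal H_\kappa\to\mathscr T$, the set $J^{(1)}(V^{(3)})$, viewed as a subset of $O_m$ via $|ij\rangle\mapsto(i,j)$, is a valid set. Conversely, for every valid set $S\subseteq O_m$ there exists a nonzero triple labeling $J$ with $J^{(1)}(V^{(3)})=S$, and it is unique up to replacing $J$ by $J\circ\sigma$ for bijections $\sigma$ of $\mathcal H_\kappa$ satisfying $\sigma(V^{(k)})=V^{(k)}$ for $k=1,2,3$.
   Context: Let $m>1$ be odd, $\kappa=\frac{m^2-1}2$, $a=\frac{m+1}2$, $\bar i=m+1-i$. $O_m=([m]\times[m])\setminus\{(a,a)\}$; $\tau(i,j)=(j,\bar i)$ and $\iota(S)=O_m\setminus S$; $S\subseteq O_m$ is valid if $|S|=\kappa$, $\tau(S)=\iota(S)$, and $|\{j:(i,j)\in S\}|=|i-\bar i|$ for all $i\in[m]$. $\mathcal H_\kappa$ is the set of $(i,j,k)\in[\kappa+1]^3$ with at least two coordinates equal to $1$, fixed with a total order; $y^0=(1,1,1)$, $V^{(1)}=\{(i,1,1):i\ge2\}$, $V^{(2)}=\{(1,j,1):j\ge2\}$, $V^{(3)}=\{(1,1,k):k\ge2\}$. Its $k$-slices form the set partition $E^{(k)}$ consisting of $e^{(k)}=V^{(k+1)}\cup V^{(k+2)}\cup\{y^0\}$ (indices mod 3, $|e^{(k)}|=m^2$) and the singletons $\{y\}$, $y\in V^{(k)}$. Let $|ij\rangle$ ($i,j\in[m]$) be the standard basis of $\mathbb C^{m\times m}$ and $|1\rangle,\dots,|m^2\rangle$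 the standard basis of $\mathbb C^{m^2}$. Let $\mathscr T=\{(|ij\rangle,|jl\rangle,|li\rangle):i,j,l\in[m]\}$; a triple labeling is a map $J=(J^{(1)},J^{(2)},J^{(3)}):\mathcal H_\kappa\to\mathscr T$. Let $\Gamma=\mathbb C[X^{(k)}_i:k\in[3],i\in[m]]$, fix a bijection $\varphi:O_m\to\{2,\dots,m^2\}$, and define $\Gamma$-linear maps $A^{(k)}:\Gamma^{m\times m}\to\Gamma^{m^2}$ by $A^{(k)}|aa\rangle=X^{(k)}_a|1\rangle$; $A^{(k)}|i\bar i\rangle=|\varphi(i,\bar i)\rangle+X^{(k)}_i|1\rangle$ for $i\neq a$; $A^{(k)}|ij\rangle=|\varphi(i,j)\rangle$ for $j\neq\bar i$. For a labeling $J$ let $AJ$ be the labeling $y\mapsto(A^{(1)}J^{(1)}(y),A^{(2)}J^{(2)}(y),A^{(3)}J^{(3)}(y))$ and $\mathrm{eval}_{\mathcal H_\kappa}(AJ)=\prod_{k=1}^3\prod_{e\in E^{(k)}}\det(AJ)^{(k)}|_e\in\Gamma$, where $\det L|_e$ is the determinant of the $|e|\times|e|$ matrix whose columns are $L(s)$, $s\in e$ in the fixed order, truncated to their first $|e|$ coordinates. Let $\mathcal X=\prod_{k=1}^3X^{(k)}_a\prod_{i=1}^m(X^{(k)}_i)^{|i-\bar i|}$. A triple labeling $J$ is nonzero if the coefficient of the monomial $\mathcal X$ in $\mathrm{eval}_{\mathcal H_\kappa}(AJ)$ is nonzero. *)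

theory Defs
  imports "HOL-Library.Poly_Mapping" "Jordan_Normal_Form.Determinant"
begin

definition kap :: "nat \<Rightarrow> nat" where "kap m = (m^2 - 1) div 2"
definition mid :: "nat \<Rightarrow> nat" where "mid m = (m + 1) div 2"
definition bar :: "nat \<Rightarrow> nat \<Rightarrow> nat" where "bar m i = m + 1 - i"

definition Om :: "nat \<Rightarrow> (nat \<times> nat) set" where
  "Om m = ({1..m} \<times> {1..m}) - {(mid m, mid m)}"

definition tau :: "nat \<Rightarrow> nat \<times> nat \<Rightarrow> nat \<times> nat" where
  "tau m p = (snd p, bar m (fst p))"

definition iota :: "nat \<Rightarrow> (nat \<times> nat) set \<Rightarrow> (nat \<times> nat) set" where
  "iota m S = Om m - S"

definition valid :: "nat \<Rightarrow> (nat \<times> nat) set \<Rightarrow> bool" where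
  "valid m S \<longleftrightarrow> S \<subseteq> Om m \<and> card S = kap m \<and> tau m ` S = iota m S \<and>
     (\<forall>i\<in>{1..m}. card {j. (i, j) \<in> S} = nat \<bar>int i - int (bar m i)\<bar>)"

type_synonym vtx = "nat \<times> nat \<times> nat"

definition Hk :: "nat \<Rightarrow> vtx set" where
  "Hk m = {(i, j, k). i \<in> {1..kap m + 1} \<and> j \<in> {1..kap m + 1} \<and> k \<in> {1..kap m + 1} \<and>
            ((i = 1 \<and> j = 1) \<or> (i = 1 \<and> k = 1) \<or> (j = 1 \<and> k = 1))}"

definition y0 :: vtx where "y0 = (1, 1, 1)"

definition V :: "nat \<Rightarrow> nat \<Rightarrow> vtx set" where
  "V m k = (if k = 1 then {(i, 1, 1) | i. 2 \<le> i \<and> i \<le> kap m + 1}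
            else if k = 2 then {(1, j, 1) | j. 2 \<le> j \<and> j \<le> kap m + 1}
            else {(1, 1, l) | l. 2 \<le> l \<and> l \<le> kap m + 1})"

definition nxt :: "nat \<Rightarrow> nat" where "nxt k = (k mod 3) + 1"

definition bigblock :: "nat \<Rightarrow> nat \<Rightarrow> vtx set" where
  "bigblock m k = V m (nxt k) \<union> V m (nxt (nxt k)) \<union> {y0}"

definition Epart :: "nat \<Rightarrow> nat \<Rightarrow> vtx set set" where
  "Epart m k = insert (bigblock m k) ((\<lambda>y. {y}) ` V m k)"

text \<open>A label (|ij>,|jl>,|li>) is represented by the triple of index pairs ((i,j),(j,l),(l,i)).\<close>
type_synonym label = "(nat \<times> nat) \<times> (nat \<times> nat) \<times> (nat \<times> nat)"

definition triple_labeling :: "nat \<Rightarrow> (vtx \<Rightarrow> label) \<Rightarrow> bool" where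
  "triple_labeling m J \<longleftrightarrow>
     (\<forall>y\<in>Hk m. \<exists>i\<in>{1..m}. \<exists>j\<in>{1..m}. \<exists>l\<in>{1..m}. J y = ((i, j), (j, l), (l, i)))"

definition Jc :: "(vtx \<Rightarrow> label) \<Rightarrow> nat \<Rightarrow> vtx \<Rightarrow> nat \<times> nat" where
  "Jc J k y = (if k = 1 then fst (J y) else if k = 2 then fst (snd (J y)) else snd (snd (J y)))"

text \<open>Gamma = C[X^(k)_i]: polynomials with variable (k,i) represented via Poly_Mapping.\<close>
type_synonym gpoly = "((nat \<times> nat) \<Rightarrow>\<^sub>0 nat) \<Rightarrow>\<^sub>0 complex"

definition Xv :: "nat \<Rightarrow> nat \<Rightarrow> gpoly" where
  "Xv k i = Poly_Mapping.single (Poly_Mapping.single (k, i) 1) 1"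

text \<open>Coordinate r (1-based, r in 1..m^2) of A^(k) |ij>.\<close>
definition Avec :: "nat \<Rightarrow> (nat \<times> nat \<Rightarrow> nat) \<Rightarrow> nat \<Rightarrow> nat \<times> nat \<Rightarrow> nat \<Rightarrow> gpoly" where
  "Avec m \<phi> k p r =
     (let (i, j) = p in
      (if (i, j) = (mid m, mid m) then (if r = 1 then Xv k (mid m) else 0)
       else (if \<phi> (i, j) = r then 1 else 0) + (if r = 1 \<and> j = bar m i then Xv k i else 0)))"

text \<open>det (AJ)^(k)|_e: columns A^(k) J^(k)(s), s in e in the fixed order hs, truncated to the
  first |e| coordinates.\<close>
definition blockdet :: "nat \<Rightarrow> (nat \<times> nat \<Rightarrow> nat) \<Rightarrow> vtx list \<Rightarrow> (vtx \<Rightarrow> label) \<Rightarrow> nat \<Rightarrow> vtx set \<Rightarrow> gpoly" where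
  "blockdet m \<phi> hs J k e =
     (let cols = filter (\<lambda>y. y \<in> e) hs; n = card e in
      det (mat n n (\<lambda>(r, c). Avec m \<phi> k (Jc J k (cols ! c)) (r + 1))))"

definition evalH :: "nat \<Rightarrow> (nat \<times> nat \<Rightarrow> nat) \<Rightarrow> vtx list \<Rightarrow> (vtx \<Rightarrow> label) \<Rightarrow> gpoly" where
  "evalH m \<phi> hs J = (\<Prod>k\<in>{1,2,3}. \<Prod>e\<in>Epart m k. blockdet m \<phi> hs J k e)"

text \<open>The exponent vector of the monomial
  X = prod_k X^(k)_a prod_i (X^(k)_i)^{|i - bar i|}.\<close>
definition monoX :: "nat \<Rightarrow> (nat \<times> nat) \<Rightarrow>\<^sub>0 nat" where
  "monoX m = (\<Sum>k\<in>{1,2,3}. Poly_Mapping.single (k, mid m) 1 +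
      (\<Sum>i\<in>{1..m}. Poly_Mapping.single (k, i) (nat \<bar>int i - int (bar m i)\<bar>)))"

definition nonzero_labeling :: "nat \<Rightarrow> (nat \<times> nat \<Rightarrow> nat) \<Rightarrow> vtx list \<Rightarrow> (vtx \<Rightarrow> label) \<Rightarrow> bool" where
  "nonzero_labeling m \<phi> hs J \<longleftrightarrow> Poly_Mapping.lookup (evalH m \<phi> hs J) (monoX m) \<noteq> 0"

end

theory Submission
  imports Defs
begin

definition sq :: "nat \<Rightarrow> (nat \<times> nat) set" where "sq m = {1..m} \<times> {1..m}"
definition ctr :: "nat \<Rightarrow> nat \<times> nat" where "ctr m = (mid m, mid m)"
definition antid :: "nat \<Rightarrow> nat \<times> nat \<Rightarrow> bool" where "antid m p \<longleftrightarrow> snd p = bar m (fst p)"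
definition tinv :: "nat \<Rightarrow> nat \<times> nat \<Rightarrow> nat \<times> nat" where "tinv m p = (bar m (snd p), fst p)"

locale mctx = fixes m :: nat assumes oddm: "odd m" and m1: "m > 1"
begin

lemma bar_in: "i \<in> {1..m} \<Longrightarrow> bar m i \<in> {1..m}" by (auto simp: bar_def)
lemma bar_bar: "i \<in> {1..m} \<Longrightarrow> bar m (bar m i) = i" by (auto simp: bar_def)
lemma mid_in: "mid m \<in> {1..m}" using m1 by (auto simp: mid_def)
lemma bar_mid: "bar m (mid m) = mid m" using oddm by (auto simp: mid_def bar_def elim!: oddE)
lemma bar_eq_mid: "i \<in> {1..m} \<Longrightarrow> bar m i = mid m \<longleftrightarrow> i = mid m"
  using oddm by (auto simp: mid_def bar_def elim!: oddE)
lemma bar_eq: "i \<in> {1..m} \<Longrightarrow> j \<in> {1..m} \<Longrightarrow> bar m i = bar m j \<longleftrightarrow> i = j"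
  by (auto simp: bar_def)
lemma kap_eq: "2 * kap m + 1 = m^2"
proof -
  have "odd (m^2)" using oddm by simp
  then obtain q where "m^2 = 2*q+1" by (rule oddE)
  then show ?thesis unfolding kap_def by simp
qed
lemma kap_pos: "kap m \<ge> 1"
proof -
  have "m \<noteq> 2" using oddm by auto
  then have "m \<ge> 3" using m1 by linarith
  then have "m*m \<ge> 3*3" by (intro mult_le_mono) auto
  then have "m^2 \<ge> 9" by (simp add: power2_eq_square)
  then show ?thesis using kap_eq by linarith
qed

lemma ctr_sq: "ctr m \<in> sq m" using mid_in by (simp add: ctr_def sq_def)
lemma tau_sq: "p \<in> sq m \<Longrightarrow> tau m p \<in> sq m" using bar_in by (auto simp: tau_def sq_def)
lemma tinv_sq: "p \<in> sq m \<Longrightarrow> tinv m p \<in> sq m" using bar_in by (auto simp: tinv_def sq_def)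
lemma tau_tinv: "p \<in> sq m \<Longrightarrow> tau m (tinv m p) = p" using bar_bar by (auto simp: tinv_def tau_def sq_def)
lemma tinv_tau: "p \<in> sq m \<Longrightarrow> tinv m (tau m p) = p" using bar_bar by (auto simp: tinv_def tau_def sq_def)
lemma tau3: "p \<in> sq m \<Longrightarrow> tau m (tau m (tau m p)) = tinv m p" using bar_bar by (auto simp: tinv_def tau_def sq_def)
lemma tau_ctr_iff: "p \<in> sq m \<Longrightarrow> tau m p = ctr m \<longleftrightarrow> p = ctr m"
  using bar_eq_mid by (auto simp: tau_def sq_def ctr_def)
lemma tau_inj: "inj_on (tau m) (sq m)" by (metis inj_on_inverseI tinv_tau)
lemma in_tau_img: "X \<subseteq> sq m \<Longrightarrow> x \<in> sq m \<Longrightarrow> x \<in> tau m ` X \<longleftrightarrow> tinv m x \<in> X"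
  by (metis image_iff subsetD tau_tinv tinv_tau)
lemma Om_eq: "Om m = sq m - {ctr m}" by (simp add: Om_def sq_def ctr_def)

end

lemma det_one_perm:
  fixes M :: "'a::comm_ring_1 mat"
  assumes M: "M \<in> carrier_mat n n" and n: "n > 0"
    and g: "bij_betw g {0..<n} {0..<n}"
    and rows: "\<And>i c. 0 < i \<Longrightarrow> i < n \<Longrightarrow> c < n \<Longrightarrow> M $$ (i,c) = (if g c = i then 1 else 0)"
  shows "\<exists>s::int. (s = 1 \<or> s = -1) \<and> det M = of_int s * M $$ (0, inv_into {0..<n} g 0)"
proof -
  let ?h = "inv_into {0..<n} g"
  define \<pi> where "\<pi> i = (if i < n then ?h i else i)" for i
  have hb: "bij_betw ?h {0..<n} {0..<n}" using g by (rule bij_betw_inv_into)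
  have gh: "g (?h i) = i" if "i < n" for i using g that by (simp add: bij_betw_inv_into_right)
  have ginj: "inj_on g {0..<n}" using g bij_betw_def by blast
  have pib: "bij_betw \<pi> {0..<n} {0..<n}"
    using hb by (rule bij_betw_cong[THEN iffD1, rotated]) (simp add: \<pi>_def)
  have perm: "\<pi> permutes {0..<n}"
    by (rule bij_imp_permutes[OF pib]) (simp add: \<pi>_def)
  have key: "\<exists>i. 0 < i \<and> i < n \<and> p i \<noteq> \<pi> i" if p: "p permutes {0..<n}" and ne: "p \<noteq> \<pi>" for p
  proof (rule ccontr)
    assume "\<not> ?thesis"
    then have eq: "p i = \<pi> i" if "0 < i" "i < n" for i using that by blast
    have "p x = \<pi> x" for x
    proof (cases "x < n")
      case False then show ?thesis using permutes_not_in[OF p] permutes_not_in[OF perm] by simp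
    next
      case True
      show ?thesis
      proof (cases "x = 0")
        case False then show ?thesis using eq True by simp
      next
        case x0: True
        have "p 0 \<in> {0..<n}" using permutes_in_image[OF p] n by simp
        then obtain j where j: "j \<in> {0..<n}" "\<pi> j = p 0" using pib by (metis bij_betw_iff_bijections)
        show ?thesis
        proof (cases "j = 0")
          case True then show ?thesis using j x0 by simp
        next
          case False
          then have "p j = p 0" using eq j by auto
          then have "j = 0" using permutes_inj[OF p] by (simp add: inj_eq)
          then show ?thesis using False by simp
        qed
      qed
    qed
    then show False using ne by blast
  qed
  have zero: "signof p * (\<Prod>i = 0..<n. M $$ (i, p i)) = 0" if p: "p permutes {0..<n}" and ne: "p \<noteq> \<pi>" for p
  proof -
    obtain i where i: "0 < i" "i < n" "p i \<noteq> \<pi> i" using key[OF p ne] by blast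
    have pi_lt: "p i < n" using permutes_in_image[OF p] i by simp
    have "g (p i) \<noteq> i"
    proof
      assume "g (p i) = i"
      then have "g (p i) = g (?h i)" using gh i by simp
      moreover have "?h i < n" using hb i by (auto simp: bij_betw_def)
      ultimately have "p i = ?h i" using ginj pi_lt inj_onD by fastforce
      then show False using i by (simp add: \<pi>_def)
    qed
    then have "M $$ (i, p i) = 0" using rows[OF i(1) i(2) pi_lt] by simp
    then have "(\<Prod>i = 0..<n. M $$ (i, p i)) = 0" using i by (intro prod_zero) auto
    then show ?thesis by simp
  qed
  have "det M = (\<Sum>p\<in>{p. p permutes {0..<n}}. signof p * (\<Prod>i = 0..<n. M $$ (i, p i)))"
    by (rule det_def'[OF M])
  also have "\<dots> = signof \<pi> * (\<Prod>i = 0..<n. M $$ (i, \<pi> i)) +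
     (\<Sum>p\<in>{p. p permutes {0..<n}} - {\<pi>}. signof p * (\<Prod>i = 0..<n. M $$ (i, p i)))"
    by (rule sum.remove) (auto simp: finite_permutations perm)
  also have "(\<Sum>p\<in>{p. p permutes {0..<n}} - {\<pi>}. signof p * (\<Prod>i = 0..<n. M $$ (i, p i))) = 0"
    by (rule sum.neutral) (use zero in auto)
  also have "(\<Prod>i = 0..<n. M $$ (i, \<pi> i)) = M $$ (0, \<pi> 0) * (\<Prod>i = Suc 0..<n. M $$ (i, \<pi> i))"
    using n by (rule prod.atLeast_Suc_lessThan)
  also have "(\<Prod>i = Suc 0..<n. M $$ (i, \<pi> i)) = 1"
  proof (rule prod.neutral, clarify)
    fix i assume i: "i \<in> {Suc 0..<n}"
    have "?h i < n" using hb i by (auto simp: bij_betw_def)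
    then show "M $$ (i, \<pi> i) = 1" using rows[of i "?h i"] i gh[of i] by (simp add: \<pi>_def)
  qed
  finally have "det M = of_int (sign \<pi>) * M $$ (0, \<pi> 0)" by simp
  moreover have "\<pi> 0 = ?h 0" using n by (simp add: \<pi>_def)
  ultimately have "det M = of_int (sign \<pi>) * M $$ (0, ?h 0)" by simp
  then show ?thesis by (intro exI[of _ "sign \<pi>"]) (auto simp: sign_def)
qed

lemma det_identical_cols':
  fixes A :: "'a::comm_ring_1 mat"
  assumes A: "A \<in> carrier_mat n n" and ij: "i \<noteq> j" and i: "i < n" and j: "j < n"
    and r: "col A i = col A j"
  shows "det A = 0"
proof -
  have "det A = det (transpose_mat A)" using det_transpose[OF A] by simp
  also have "\<dots> = 0"
    by (rule det_identical_rows[OF _ ij i j]) (use A r i j in auto)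
  finally show ?thesis .
qed

definition psi :: "nat \<Rightarrow> (nat \<times> nat \<Rightarrow> nat) \<Rightarrow> nat \<times> nat \<Rightarrow> nat" where
  "psi m \<phi> p = (if p = ctr m then 1 else \<phi> p)"

locale mctx2 = mctx + fixes \<phi> :: "nat \<times> nat \<Rightarrow> nat" and hs :: "vtx list"
  assumes phib: "bij_betw \<phi> (Om m) {2..m^2}" and dhs: "distinct hs" and shs: "set hs = Hk m"
begin

lemma card_sq: "card (sq m) = m^2" by (simp add: sq_def power2_eq_square)

lemma phi_ne1: assumes "p \<in> sq m" "p \<noteq> ctr m" shows "\<phi> p \<noteq> 1"
proof -
  have "p \<in> Om m" unfolding Om_eq using assms by blast
  then have "\<phi> p \<in> {2..m^2}" by (rule bij_betw_apply[OF phib])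
  then show ?thesis by simp
qed

lemma of_int_single: "(of_int s :: gpoly) * Poly_Mapping.single e 1 = Poly_Mapping.single e (of_int s)"
proof -
  have "(of_int s :: gpoly) * Poly_Mapping.single e 1 = Poly_Mapping.single 0 (of_int s) * Poly_Mapping.single e 1"
    by (simp only: single_of_int)
  also have "\<dots> = Poly_Mapping.single (0 + e) (of_int s * 1)" by (rule mult_single)
  finally show ?thesis by simp
qed

lemma psi_bij: "bij_betw (psi m \<phi>) (sq m) {1..m^2}"
proof -
  have a: "bij_betw (psi m \<phi>) (sq m - {ctr m}) {2..m^2}"
    using phib unfolding Om_eq by (rule bij_betw_cong[THEN iffD1, rotated]) (auto simp: psi_def)
  have b: "bij_betw (psi m \<phi>) {ctr m} {1}" by (simp add: psi_def)
  have "bij_betw (psi m \<phi>) ((sq m - {ctr m}) \<union> {ctr m}) ({2..m^2} \<union> {1})"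
    by (rule bij_betw_combine[OF a b]) auto
  moreover have "(sq m - {ctr m}) \<union> {ctr m} = sq m" using ctr_sq by auto
  moreover have "{2..m^2} \<union> {1} = {1..m^2::nat}" using m1 by auto
  ultimately show ?thesis by simp
qed

lemma Avec_row1: "L \<in> sq m \<Longrightarrow> Avec m \<phi> k L 1 = (if antid m L then Xv k (fst L) else 0)"
  using phi_ne1[of L] bar_mid
  by (cases L) (auto simp: Avec_def antid_def ctr_def)

lemma Avec_rowr: "L \<in> sq m \<Longrightarrow> r \<ge> 2 \<Longrightarrow> Avec m \<phi> k L r = (if psi m \<phi> L = r then 1 else 0)"
  by (cases L) (auto simp: Avec_def psi_def ctr_def)

lemma cols_props:
  assumes "e \<subseteq> Hk m"
  shows "distinct (filter (\<lambda>y. y \<in> e) hs)" "set (filter (\<lambda>y. y \<in> e) hs) = e"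
    "length (filter (\<lambda>y. y \<in> e) hs) = card e"
proof -
  show d: "distinct (filter (\<lambda>y. y \<in> e) hs)" using dhs by simp
  show s: "set (filter (\<lambda>y. y \<in> e) hs) = e" using assms shs by auto
  show "length (filter (\<lambda>y. y \<in> e) hs) = card e" using distinct_card[OF d] s by simp
qed

lemma big_block:
  assumes e: "e \<subseteq> Hk m" and ce: "card e = m^2" and inr: "\<forall>y\<in>e. Jc J k y \<in> sq m"
  shows "\<exists>c. blockdet m \<phi> hs J k e = Poly_Mapping.single (Poly_Mapping.single (k, mid m) 1) c \<and>
           (c \<noteq> 0 \<longleftrightarrow> bij_betw (Jc J k) e (sq m))"
proof -
  define cols where "cols = filter (\<lambda>y. y \<in> e) hs"
  define n where "n = m^2"
  define L where "L c = Jc J k (cols ! c)" for c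
  define M where "M = mat n n (\<lambda>(r, c). Avec m \<phi> k (L c) (r + 1))"
  note cp = cols_props[OF e, folded cols_def]
  have lenc: "length cols = n" using cp ce n_def by simp
  have bd: "blockdet m \<phi> hs J k e = det M"
    unfolding blockdet_def Let_def M_def L_def cols_def[symmetric] ce n_def by simp
  have M: "M \<in> carrier_mat n n" by (simp add: M_def)
  have n0: "n > 0" using m1 n_def by simp
  have nthb: "bij_betw ((!) cols) {0..<n} e"
    using bij_betw_nth[OF cp(1), of "{..<length cols}" e] cp(2) lenc by (simp add: atLeast0LessThan)
  have Lsq: "L c \<in> sq m" if "c < n" for c
    using inr nthb that unfolding L_def bij_betw_def by auto
  show ?thesis
  proof (cases "bij_betw (Jc J k) e (sq m)")
    case True
    have Lb: "bij_betw L {0..<n} (sq m)"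
      unfolding L_def using bij_betw_trans[OF nthb True] by (simp add: comp_def)
    define g where "g = (\<lambda>c. psi m \<phi> (L c) - 1)"
    have gb1: "bij_betw (\<lambda>c. psi m \<phi> (L c)) {0..<n} {1..n}"
      using bij_betw_trans[OF Lb psi_bij] n_def by (simp add: comp_def)
    have gb: "bij_betw g {0..<n} {0..<n}"
    proof -
      have "bij_betw (\<lambda>x. x - 1) {1..n} {0..<n}"
        by (rule bij_betwI[where g = Suc]) auto
      from bij_betw_trans[OF gb1 this] show ?thesis by (simp add: g_def comp_def)
    qed
    have psi1: "psi m \<phi> (L c) \<ge> 1" if "c < n" for c using gb1 that by (auto simp: bij_betw_def)
    have rows: "M $$ (i,c) = (if g c = i then 1 else 0)" if "0 < i" "i < n" "c < n" for i c
    proof -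
      have "M $$ (i,c) = Avec m \<phi> k (L c) (i + 1)" using that by (simp add: M_def)
      also have "\<dots> = (if psi m \<phi> (L c) = i + 1 then 1 else 0)"
        using Avec_rowr[OF Lsq[OF that(3)], of "i+1"] that by simp
      also have "\<dots> = (if g c = i then 1 else 0)" using psi1[OF that(3)] by (auto simp: g_def)
      finally show ?thesis .
    qed
    obtain s :: int where s: "s = 1 \<or> s = -1" and dM: "det M = of_int s * M $$ (0, inv_into {0..<n} g 0)"
      using det_one_perm[OF M n0 gb rows] by blast
    define h0 where "h0 = inv_into {0..<n} g 0"
    have h0: "h0 < n" "g h0 = 0"
      using bij_betw_apply[OF bij_betw_inv_into[OF gb], of 0] bij_betw_inv_into_right[OF gb, of 0] n0
      unfolding h0_def by auto
    have "g h0 = psi m \<phi> (L h0) - 1" by (simp add: g_def)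
    then have p1: "psi m \<phi> (L h0) = 1" using h0(2) psi1[OF h0(1)] by linarith
    have Lc: "L h0 = ctr m"
    proof (rule ccontr)
      assume a: "L h0 \<noteq> ctr m"
      then have "psi m \<phi> (L h0) = \<phi> (L h0)" by (simp add: psi_def)
      then show False using p1 phi_ne1[OF Lsq[OF h0(1)] a] by simp
    qed
    have "M $$ (0, h0) = Avec m \<phi> k (L h0) 1" using h0 n0 by (simp add: M_def)
    also have "\<dots> = Xv k (mid m)" using Avec_row1[OF Lsq[OF h0(1)]] bar_mid
      unfolding Lc by (simp add: antid_def ctr_def)
    finally have "M $$ (0, h0) = Xv k (mid m)" .
    then have "det M = of_int s * Xv k (mid m)" using dM h0_def by simp
    also have "\<dots> = Poly_Mapping.single (Poly_Mapping.single (k, mid m) 1) (of_int s)"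
      unfolding Xv_def of_int_single by simp
    finally show ?thesis using bd True s by (intro exI[of _ "of_int s"]) auto
  next
    case False
    have "\<not> inj_on (Jc J k) e"
    proof
      assume inj: "inj_on (Jc J k) e"
      have "Jc J k ` e = sq m"
        by (rule card_subset_eq) (use inr inj ce card_sq in \<open>auto simp: card_image sq_def\<close>)
      then show False using False inj by (simp add: bij_betw_def)
    qed
    then obtain y1 y2 where y: "y1 \<in> e" "y2 \<in> e" "y1 \<noteq> y2" "Jc J k y1 = Jc J k y2"
      unfolding inj_on_def by blast
    have im: "(!) cols ` {0..<n} = e" using nthb by (simp add: bij_betw_def)
    obtain c1 where c1: "c1 < n" "cols ! c1 = y1" using y(1) im by (metis atLeastLessThan_iff imageE)
    obtain c2 where c2: "c2 < n" "cols ! c2 = y2" using y(2) im by (metis atLeastLessThan_iff imageE)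
    have "c1 \<noteq> c2" using c1 c2 y by auto
    moreover have "col M c1 = col M c2"
    proof -
      have Leq: "L c1 = L c2" unfolding L_def using c1 c2 y(4) by simp
      have "col M c1 = vec n (\<lambda>r. Avec m \<phi> k (L c1) (r + 1))"
        unfolding M_def using c1 by (simp add: col_mat)
      also have "\<dots> = col M c2" unfolding M_def Leq using c2 by (simp add: col_mat)
      finally show ?thesis .
    qed
    ultimately have "det M = 0" using det_identical_cols'[OF M _ c1(1) c2(1)] by blast
    then have "blockdet m \<phi> hs J k e = Poly_Mapping.single (Poly_Mapping.single (k, mid m) 1) 0"
      using bd by simp
    then show ?thesis using False by blast
  qed
qed

lemma filter_single: "distinct xs \<Longrightarrow> y \<in> set xs \<Longrightarrow> filter (\<lambda>x. x \<in> {y}) xs = [y]"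
  by (induction xs) (auto simp: filter_empty_conv)

lemma single_block:
  assumes y: "y \<in> Hk m" and inr: "Jc J k y \<in> sq m"
  shows "\<exists>c. blockdet m \<phi> hs J k {y} =
      Poly_Mapping.single (Poly_Mapping.single (k, fst (Jc J k y)) 1) c \<and> (c \<noteq> 0 \<longleftrightarrow> antid m (Jc J k y))"
proof -
  define M where "M = mat 1 1 (\<lambda>(r, c). Avec m \<phi> k (Jc J k ([y] ! c)) (r + 1))"
  have bd: "blockdet m \<phi> hs J k {y} = det M"
    unfolding blockdet_def Let_def M_def using filter_single[OF dhs] y shs by simp
  have M: "M \<in> carrier_mat 1 1" by (simp add: M_def)
  have gb: "bij_betw id {0..<1::nat} {0..<1}" by simp
  obtain s :: int where s: "s = 1 \<or> s = -1" and dM: "det M = of_int s * M $$ (0, inv_into {0..<1} id 0)"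
    using det_one_perm[OF M _ gb] by force
  have "inv_into {0..<1::nat} id 0 = 0" by (simp add: inv_into_def)
  then have "det M = of_int s * (if antid m (Jc J k y) then Xv k (fst (Jc J k y)) else 0)"
    using dM Avec_row1[OF inr] by (simp add: M_def)
  also have "\<dots> = Poly_Mapping.single (Poly_Mapping.single (k, fst (Jc J k y)) 1)
       (if antid m (Jc J k y) then of_int s else 0)"
    by (simp add: Xv_def of_int_single)
  finally have "blockdet m \<phi> hs J k {y} = Poly_Mapping.single (Poly_Mapping.single (k, fst (Jc J k y)) 1)
       (if antid m (Jc J k y) then of_int s else 0)" using bd by simp
  moreover have "(if antid m (Jc J k y) then (of_int s::complex) else 0) \<noteq> 0 \<longleftrightarrow> antid m (Jc J k y)"
    using s by auto
  ultimately show ?thesis by blast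
qed

end

context mctx begin

lemma V1_eq: "V m 1 = (\<lambda>i. (i,1,1)) ` {2..kap m + 1}" by (auto simp: V_def)
lemma V2_eq: "V m 2 = (\<lambda>i. (1,i,1)) ` {2..kap m + 1}" by (auto simp: V_def)
lemma V3_eq: "V m 3 = (\<lambda>i. (1,1,i)) ` {2..kap m + 1}" by (auto simp: V_def)

lemma card_V: "k \<in> {1,2,3} \<Longrightarrow> card (V m k) = kap m"
proof -
  have a: "card ((\<lambda>i. (i,1::nat,1::nat)) ` {2..kap m + 1}) = kap m"
    by (subst card_image) (auto simp: inj_on_def)
  have b: "card ((\<lambda>i. (1::nat,i,1::nat)) ` {2..kap m + 1}) = kap m"
    by (subst card_image) (auto simp: inj_on_def)
  have c: "card ((\<lambda>i. (1::nat,1::nat,i)) ` {2..kap m + 1}) = kap m"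
    by (subst card_image) (auto simp: inj_on_def)
  assume "k \<in> {1,2,3}" then show ?thesis using a b c V1_eq V2_eq V3_eq by auto
qed

lemma finite_V: "finite (V m k)" by (simp add: V_def)

lemma y0_notin: "y0 \<notin> V m k" by (auto simp: V_def y0_def)
lemma V12: "V m 1 \<inter> V m 2 = {}" by (auto simp: V_def)
lemma V13: "V m 1 \<inter> V m 3 = {}" by (auto simp: V_def)
lemma V23: "V m 2 \<inter> V m 3 = {}" by (auto simp: V_def)

lemma Hk_eq: "Hk m = V m 1 \<union> V m 2 \<union> V m 3 \<union> {y0}"
  unfolding Hk_def V_def y0_def by auto

lemma V_sub: "V m k \<subseteq> Hk m" unfolding Hk_def V_def by auto
lemma y0_Hk: "y0 \<in> Hk m" unfolding Hk_def y0_def by auto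

lemma nxt_vals: "nxt 1 = 2" "nxt 2 = 3" "nxt 3 = 1" by (simp_all add: nxt_def)
lemma bb1: "bigblock m 1 = V m 2 \<union> V m 3 \<union> {y0}" unfolding bigblock_def nxt_vals by simp
lemma bb2: "bigblock m 2 = V m 3 \<union> V m 1 \<union> {y0}" unfolding bigblock_def nxt_vals by simp
lemma bb3: "bigblock m 3 = V m 1 \<union> V m 2 \<union> {y0}" unfolding bigblock_def nxt_vals by simp

lemma bb_sub: "bigblock m k \<subseteq> Hk m" unfolding bigblock_def using V_sub y0_Hk by auto

lemma card_union3: "finite A \<Longrightarrow> finite B \<Longrightarrow> A \<inter> B = {} \<Longrightarrow> y \<notin> A \<Longrightarrow> y \<notin> B \<Longrightarrow>
   card (A \<union> B \<union> {y}) = card A + card B + 1"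
  by (simp add: card_Un_disjoint)

lemma card_bb: "k \<in> {1,2,3} \<Longrightarrow> card (bigblock m k) = m^2"
proof -
  have "card (V m a \<union> V m b \<union> {y0}) = m^2" if "a \<in> {1,2,3}" "b \<in> {1,2,3}" "V m a \<inter> V m b = {}" for a b
    using card_union3[OF finite_V finite_V that(3) y0_notin y0_notin] card_V that kap_eq by simp
  moreover assume "k \<in> {1,2,3}"
  ultimately show ?thesis using bb1 bb2 bb3 V12 V13 V23 by (auto simp: Int_commute)
qed

lemma bb_notin: "bigblock m k \<notin> (\<lambda>y. {y}) ` V m k"
proof
  assume "bigblock m k \<in> (\<lambda>y. {y}) ` V m k"
  then obtain y where y: "y \<in> V m k" "bigblock m k = {y}" by auto
  have "y0 \<in> bigblock m k" by (simp add: bigblock_def)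
  then have "y = y0" using y by auto
  then show False using y y0_notin by auto
qed

end

definition cond :: "nat \<Rightarrow> (vtx \<Rightarrow> label) \<Rightarrow> bool" where
  "cond m J \<longleftrightarrow> (\<forall>k\<in>{1,2,3}. bij_betw (Jc J k) (bigblock m k) (sq m) \<and> (\<forall>y\<in>V m k. antid m (Jc J k y)) \<and>
      (\<forall>i\<in>{1..m}. card {y\<in>V m k. fst (Jc J k y) = i} = nat \<bar>int i - int (bar m i)\<bar>))"

lemma prod_single:
  fixes e :: "'i \<Rightarrow> 'a::comm_monoid_add" and c :: "'i \<Rightarrow> 'b::comm_semiring_1"
  shows "finite A \<Longrightarrow> (\<Prod>x\<in>A. Poly_Mapping.single (e x) (c x)) = Poly_Mapping.single (\<Sum>x\<in>A. e x) (\<Prod>x\<in>A. c x)"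
proof (induction A rule: finite_induct)
  case empty then show ?case by simp
next
  case (insert x F) then show ?case by (simp add: mult_single)
qed

lemma pm_eq_iff: "p = q \<longleftrightarrow> (\<forall>x. Poly_Mapping.lookup p x = Poly_Mapping.lookup q x)"
  using poly_mapping_eqI by auto

context mctx begin

lemma jc_sq: "triple_labeling m J \<Longrightarrow> y \<in> Hk m \<Longrightarrow> Jc J k y \<in> sq m"
  unfolding triple_labeling_def by (force simp: Jc_def sq_def)

lemma lookup_sumV:
  "Poly_Mapping.lookup (\<Sum>y\<in>A. Poly_Mapping.single (k, f y) (1::nat)) (k', i) = (if k = k' then card {y\<in>A. f y = i} else 0)"
  if "finite A"
proof -
  have "Poly_Mapping.lookup (\<Sum>y\<in>A. Poly_Mapping.single (k, f y) (1::nat)) (k', i) = (\<Sum>y\<in>A. if k = k' \<and> f y = i then 1 else 0)"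
    unfolding lookup_sum by (intro sum.cong refl) (simp add: lookup_single when_def)
  also have "\<dots> = (if k = k' then card {y\<in>A. f y = i} else 0)"
    using that by (simp add: sum.If_cases Int_def conj_commute)
  finally show ?thesis .
qed

lemma lookup_sumI:
  "Poly_Mapping.lookup (\<Sum>j\<in>{1..m}. Poly_Mapping.single (k, j) (d j :: nat)) (k', i) = (if k = k' \<and> i \<in> {1..m} then d i else 0)"
proof -
  have "Poly_Mapping.lookup (\<Sum>j\<in>{1..m}. Poly_Mapping.single (k, j) (d j :: nat)) (k', i) = (\<Sum>j\<in>{1..m}. if k = k' \<and> j = i then d j else 0)"
    unfolding lookup_sum by (intro sum.cong refl) (auto simp: lookup_single when_def)
  also have "\<dots> = (if k = k' \<and> i \<in> {1..m} then d i else 0)"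
    by (cases "k = k'") auto
  finally show ?thesis .
qed

lemma mono_eq:
  assumes fr: "\<forall>k\<in>{1,2,3::nat}. \<forall>y\<in>V m k. f k y \<in> {1..m}"
  shows "(\<Sum>k\<in>{1,2,3}. Poly_Mapping.single (k, mid m) 1 + (\<Sum>y\<in>V m k. Poly_Mapping.single (k, f k y) 1)) = monoX m
     \<longleftrightarrow> (\<forall>k\<in>{1,2,3}. \<forall>i\<in>{1..m}. card {y\<in>V m k. f k y = i} = nat \<bar>int i - int (bar m i)\<bar>)"
proof -
  define d where "d i = nat \<bar>int i - int (bar m i)\<bar>" for i
  let ?K = "{1,2,3::nat}"
  have L: "Poly_Mapping.lookup (\<Sum>k\<in>?K. Poly_Mapping.single (k, mid m) 1 + (\<Sum>y\<in>V m k. Poly_Mapping.single (k, f k y) 1)) (k', i)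
     = (\<Sum>k\<in>?K. if k = k' then (if mid m = i then 1 else 0) + card {y\<in>V m k. f k y = i} else 0)" for k' i
    by (simp add: lookup_sum lookup_add lookup_single when_def sum.If_cases Int_def conj_commute finite_V)
  have R: "Poly_Mapping.lookup (monoX m) (k', i)
     = (\<Sum>k\<in>?K. if k = k' then (if mid m = i then 1 else 0) + (if i \<in> {1..m} then d i else 0) else 0)" for k' i
    unfolding monoX_def d_def[symmetric]
    by (simp add: lookup_sum lookup_add lookup_sumI lookup_single when_def)
  have zero: "card {y\<in>V m k. f k y = i} = 0" if "k \<in> ?K" "i \<notin> {1..m}" for k i
  proof -
    have "{y\<in>V m k. f k y = i} = {}" using fr that by fastforce
    then show ?thesis by (metis card.empty)
  qed
  have "(\<Sum>k\<in>?K. Poly_Mapping.single (k, mid m) 1 + (\<Sum>y\<in>V m k. Poly_Mapping.single (k, f k y) 1)) = monoX m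
     \<longleftrightarrow> (\<forall>k' i. Poly_Mapping.lookup (\<Sum>k\<in>?K. Poly_Mapping.single (k, mid m) 1 + (\<Sum>y\<in>V m k. Poly_Mapping.single (k, f k y) 1)) (k', i) = Poly_Mapping.lookup (monoX m) (k', i))"
    by (simp add: pm_eq_iff)
  also have "\<dots> \<longleftrightarrow> (\<forall>k'\<in>?K. \<forall>i. card {y\<in>V m k'. f k' y = i} = (if i \<in> {1..m} then d i else 0))"
    unfolding L R by (auto simp: sum.delta)
  also have "\<dots> \<longleftrightarrow> (\<forall>k\<in>?K. \<forall>i\<in>{1..m}. card {y\<in>V m k. f k y = i} = d i)"
    using zero by auto
  finally show ?thesis unfolding d_def .
qed

end

context mctx2 begin

lemma char:
  assumes tl: "triple_labeling m J"
  shows "nonzero_labeling m \<phi> hs J \<longleftrightarrow> cond m J"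
proof -
  let ?K = "{1,2,3::nat}"
  define E where "E k e = (if e = bigblock m k then Poly_Mapping.single (k, mid m) 1
      else Poly_Mapping.single (k, fst (Jc J k (the_elem e))) (1::nat))" for k e
  define C where "C k e = Poly_Mapping.lookup (blockdet m \<phi> hs J k e) (E k e)" for k e
  define ok where "ok k e = (if e = bigblock m k then bij_betw (Jc J k) (bigblock m k) (sq m)
      else antid m (Jc J k (the_elem e)))" for k e
  have inr: "\<forall>y\<in>Hk m. Jc J k y \<in> sq m" for k using jc_sq[OF tl] by blast
  have blk: "blockdet m \<phi> hs J k e = Poly_Mapping.single (E k e) (C k e) \<and> (C k e \<noteq> 0 \<longleftrightarrow> ok k e)"
    if k: "k \<in> ?K" and e: "e \<in> Epart m k" for k e
  proof (cases "e = bigblock m k")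
    case True
    obtain c where c: "blockdet m \<phi> hs J k e = Poly_Mapping.single (Poly_Mapping.single (k, mid m) 1) c"
      "c \<noteq> 0 \<longleftrightarrow> bij_betw (Jc J k) e (sq m)"
      using big_block[OF bb_sub card_bb[OF k], of J] inr[of k] bb_sub True by blast
    then show ?thesis using True by (simp add: E_def C_def ok_def)
  next
    case False
    then obtain y where y: "y \<in> V m k" "e = {y}" using e by (auto simp: Epart_def)
    have yH: "y \<in> Hk m" using y V_sub by blast
    obtain c where c: "blockdet m \<phi> hs J k {y} = Poly_Mapping.single (Poly_Mapping.single (k, fst (Jc J k y)) 1) c"
      "c \<noteq> 0 \<longleftrightarrow> antid m (Jc J k y)"
      using single_block[OF yH inr[of k, rule_format, OF yH]] by blast
    then show ?thesis using False y by (simp add: E_def C_def ok_def)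
  qed
  have finE: "finite (Epart m k)" for k by (simp add: Epart_def finite_V)
  have "evalH m \<phi> hs J = (\<Prod>k\<in>?K. \<Prod>e\<in>Epart m k. Poly_Mapping.single (E k e) (C k e))"
    unfolding evalH_def using blk by (intro prod.cong refl) auto
  also have "\<dots> = (\<Prod>k\<in>?K. Poly_Mapping.single (\<Sum>e\<in>Epart m k. E k e) (\<Prod>e\<in>Epart m k. C k e))"
    by (intro prod.cong refl prod_single finE)
  also have "\<dots> = Poly_Mapping.single (\<Sum>k\<in>?K. \<Sum>e\<in>Epart m k. E k e) (\<Prod>k\<in>?K. \<Prod>e\<in>Epart m k. C k e)"
    by (rule prod_single) simp
  finally have ev: "evalH m \<phi> hs J = Poly_Mapping.single (\<Sum>k\<in>?K. \<Sum>e\<in>Epart m k. E k e) (\<Prod>k\<in>?K. \<Prod>e\<in>Epart m k. C k e)" .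
  have nz: "nonzero_labeling m \<phi> hs J \<longleftrightarrow> (\<Sum>k\<in>?K. \<Sum>e\<in>Epart m k. E k e) = monoX m \<and> (\<Prod>k\<in>?K. \<Prod>e\<in>Epart m k. C k e) \<noteq> 0"
    unfolding nonzero_labeling_def ev by (auto simp: lookup_single when_def)
  have ep: "Epart m k = insert (bigblock m k) ((\<lambda>y. {y}) ` V m k)" for k by (simp add: Epart_def)
  have injs: "inj_on (\<lambda>y. {y}) (V m k)" for k by (auto simp: inj_on_def)
  have prodC: "(\<Prod>k\<in>?K. \<Prod>e\<in>Epart m k. C k e) \<noteq> 0 \<longleftrightarrow> (\<forall>k\<in>?K. \<forall>e\<in>Epart m k. ok k e)"
  proof -
    have "(\<Prod>k\<in>?K. \<Prod>e\<in>Epart m k. C k e) \<noteq> 0 \<longleftrightarrow> (\<forall>k\<in>?K. \<forall>e\<in>Epart m k. C k e \<noteq> 0)"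
      using finE by (simp add: prod_zero_iff)
    also have "\<dots> \<longleftrightarrow> (\<forall>k\<in>?K. \<forall>e\<in>Epart m k. ok k e)" using blk by blast
    finally show ?thesis .
  qed
  have okeq: "(\<forall>e\<in>Epart m k. ok k e) \<longleftrightarrow> bij_betw (Jc J k) (bigblock m k) (sq m) \<and> (\<forall>y\<in>V m k. antid m (Jc J k y))" for k
  proof -
    have "{y} \<noteq> bigblock m k" if "y \<in> V m k" for y using bb_notin that by blast
    then show ?thesis unfolding ep by (auto simp: ok_def)
  qed
  have sumE: "(\<Sum>e\<in>Epart m k. E k e) = Poly_Mapping.single (k, mid m) 1 + (\<Sum>y\<in>V m k. Poly_Mapping.single (k, fst (Jc J k y)) 1)" for k
  proof -
    have "(\<Sum>e\<in>Epart m k. E k e) = E k (bigblock m k) + (\<Sum>e\<in>(\<lambda>y. {y}) ` V m k. E k e)"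
      unfolding ep by (rule sum.insert) (auto simp: finite_V bb_notin)
    also have "(\<Sum>e\<in>(\<lambda>y. {y}) ` V m k. E k e) = (\<Sum>y\<in>V m k. E k {y})"
      by (rule sum.reindex[OF injs, unfolded comp_def])
    also have "\<dots> = (\<Sum>y\<in>V m k. Poly_Mapping.single (k, fst (Jc J k y)) 1)"
    proof (rule sum.cong[OF refl])
      fix y assume "y \<in> V m k"
      then have "{y} \<noteq> bigblock m k" using bb_notin by blast
      then show "E k {y} = Poly_Mapping.single (k, fst (Jc J k y)) 1" by (simp add: E_def)
    qed
    finally show ?thesis by (simp add: E_def)
  qed
  have fr: "\<forall>k\<in>?K. \<forall>y\<in>V m k. fst (Jc J k y) \<in> {1..m}"
  proof (intro ballI)
    fix k y assume "y \<in> V m k"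
    then have "Jc J k y \<in> sq m" using inr V_sub by blast
    then show "fst (Jc J k y) \<in> {1..m}" unfolding sq_def by (simp add: mem_Times_iff)
  qed
  have "nonzero_labeling m \<phi> hs J \<longleftrightarrow>
     (\<forall>k\<in>?K. \<forall>i\<in>{1..m}. card {y\<in>V m k. fst (Jc J k y) = i} = nat \<bar>int i - int (bar m i)\<bar>) \<and>
     (\<forall>k\<in>?K. bij_betw (Jc J k) (bigblock m k) (sq m) \<and> (\<forall>y\<in>V m k. antid m (Jc J k y)))"
    unfolding nz prodC sumE mono_eq[OF fr] using okeq by blast
  then show ?thesis unfolding cond_def by blast
qed

end

definition lab1 :: "nat \<Rightarrow> nat \<times> nat \<Rightarrow> label" where
  "lab1 m p = ((bar m (fst p), fst p), p, (snd p, bar m (fst p)))"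
definition lab2 :: "nat \<Rightarrow> nat \<times> nat \<Rightarrow> label" where
  "lab2 m p = ((snd p, bar m (fst p)), (bar m (fst p), fst p), p)"
definition lab3 :: "nat \<Rightarrow> nat \<times> nat \<Rightarrow> label" where
  "lab3 m p = (p, (snd p, bar m (fst p)), (bar m (fst p), fst p))"
definition ctrlab :: "nat \<Rightarrow> label" where "ctrlab m = (ctr m, ctr m, ctr m)"

lemma Jc_lab1: "J y = lab1 m p \<Longrightarrow> Jc J 1 y = (bar m (fst p), fst p) \<and> Jc J 2 y = p \<and> Jc J 3 y = tau m p"
  by (simp add: Jc_def lab1_def tau_def)
lemma Jc_lab2: "J y = lab2 m p \<Longrightarrow> Jc J 1 y = tau m p \<and> Jc J 2 y = (bar m (fst p), fst p) \<and> Jc J 3 y = p"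
  by (simp add: Jc_def lab2_def tau_def)
lemma Jc_lab3: "J y = lab3 m p \<Longrightarrow> Jc J 1 y = p \<and> Jc J 2 y = tau m p \<and> Jc J 3 y = (bar m (fst p), fst p)"
  by (simp add: Jc_def lab3_def tau_def)
lemma J_eq_Jc: "J y = (Jc J 1 y, Jc J 2 y, Jc J 3 y)" by (simp add: Jc_def)

lemma cond_bij: "cond m J \<Longrightarrow> k \<in> {1,2,3} \<Longrightarrow> bij_betw (Jc J k) (bigblock m k) (sq m)"
  unfolding cond_def by blast
lemma cond_antid: "cond m J \<Longrightarrow> k \<in> {1,2,3} \<Longrightarrow> y \<in> V m k \<Longrightarrow> antid m (Jc J k y)"
  unfolding cond_def by blast
lemma cond_count: "cond m J \<Longrightarrow> k \<in> {1,2,3} \<Longrightarrow> i \<in> {1..m} \<Longrightarrow>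
   card {y\<in>V m k. fst (Jc J k y) = i} = nat \<bar>int i - int (bar m i)\<bar>"
  unfolding cond_def by blast

context mctx begin

lemma tl_form: "triple_labeling m J \<Longrightarrow> y \<in> Hk m \<Longrightarrow>
   \<exists>i j l. i \<in> {1..m} \<and> j \<in> {1..m} \<and> l \<in> {1..m} \<and> J y = ((i, j), (j, l), (l, i))"
  unfolding triple_labeling_def by blast

lemma tinv3: "p \<in> sq m \<Longrightarrow> tinv m (tinv m (tinv m p)) = tau m p"
  using bar_bar by (auto simp: tinv_def tau_def sq_def)
lemma tinv_ctr_iff: "p \<in> sq m \<Longrightarrow> tinv m p = ctr m \<longleftrightarrow> p = ctr m"
  using bar_eq_mid by (auto simp: tinv_def sq_def ctr_def)

lemma lab_V3:
  assumes tl: "triple_labeling m J" and c: "cond m J" and y: "y \<in> V m 3"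
  shows "J y = lab3 m (Jc J 1 y)"
proof -
  have yH: "y \<in> Hk m" using y V_sub by blast
  obtain i j l where ijl: "i \<in> {1..m}" "j \<in> {1..m}" "l \<in> {1..m}" "J y = ((i, j), (j, l), (l, i))"
    using tl_form[OF tl yH] by blast
  have "antid m (Jc J 3 y)" using cond_antid[OF c _ y] by simp
  then have "i = bar m l" using ijl by (simp add: antid_def Jc_def)
  then have "l = bar m i" using bar_bar ijl by simp
  then show ?thesis using ijl by (simp add: lab3_def Jc_def)
qed

lemma lab_V1:
  assumes tl: "triple_labeling m J" and c: "cond m J" and y: "y \<in> V m 1"
  shows "J y = lab1 m (Jc J 2 y)"
proof -
  have yH: "y \<in> Hk m" using y V_sub by blast
  obtain i j l where ijl: "i \<in> {1..m}" "j \<in> {1..m}" "l \<in> {1..m}" "J y = ((i, j), (j, l), (l, i))"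
    using tl_form[OF tl yH] by blast
  have "antid m (Jc J 1 y)" using cond_antid[OF c _ y] by simp
  then have "j = bar m i" using ijl by (simp add: antid_def Jc_def)
  then have "i = bar m j" using bar_bar ijl by simp
  then show ?thesis using ijl by (simp add: lab1_def Jc_def)
qed

lemma lab_V2:
  assumes tl: "triple_labeling m J" and c: "cond m J" and y: "y \<in> V m 2"
  shows "J y = lab2 m (Jc J 3 y)"
proof -
  have yH: "y \<in> Hk m" using y V_sub by blast
  obtain i j l where ijl: "i \<in> {1..m}" "j \<in> {1..m}" "l \<in> {1..m}" "J y = ((i, j), (j, l), (l, i))"
    using tl_form[OF tl yH] by blast
  have "antid m (Jc J 2 y)" using cond_antid[OF c _ y] by simp
  then have "l = bar m j" using ijl by (simp add: antid_def Jc_def)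
  then have "j = bar m l" using bar_bar ijl by simp
  then show ?thesis using ijl by (simp add: lab2_def Jc_def)
qed

lemma no_mid:
  assumes c: "cond m J" and k: "k \<in> {1,2,3}" and y: "y \<in> V m k"
  shows "fst (Jc J k y) \<noteq> mid m"
proof
  assume a: "fst (Jc J k y) = mid m"
  have "card {y\<in>V m k. fst (Jc J k y) = mid m} = nat \<bar>int (mid m) - int (bar m (mid m))\<bar>"
    by (rule cond_count[OF c k mid_in])
  also have "\<dots> = 0" using bar_mid by simp
  finally have "{y\<in>V m k. fst (Jc J k y) = mid m} = {}" using finite_V by simp
  then show False using a y by blast
qed

lemma part:
  assumes b: "bij_betw f (A \<union> B \<union> {y0}) (sq m)" and AB: "A \<inter> B = {}" and yA: "y0 \<notin> A" and yB: "y0 \<notin> B"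
    and cA: "ctr m \<notin> f ` A" and cB: "ctr m \<notin> f ` B"
  shows "f y0 = ctr m" "\<And>x. x \<in> sq m - {ctr m} \<Longrightarrow> x \<in> f ` A \<longleftrightarrow> x \<notin> f ` B"
    "f ` A \<subseteq> sq m - {ctr m}" "f ` B \<subseteq> sq m - {ctr m}"
proof -
  have im0: "f ` (A \<union> B \<union> {y0}) = sq m" by (rule bij_betw_imp_surj_on[OF b])
  then have im: "f ` A \<union> f ` B \<union> {f y0} = sq m" by (simp add: image_Un)
  have inj: "inj_on f (A \<union> B \<union> {y0})" by (rule bij_betw_imp_inj_on[OF b])
  have "ctr m \<in> f ` A \<union> f ` B \<union> {f y0}" using im ctr_sq by simp
  then show fy: "f y0 = ctr m" using cA cB by simp
  have dis: "f ` A \<inter> f ` B = {}"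
  proof -
    have "f ` (A \<inter> B) = f ` A \<inter> f ` B" by (rule inj_on_image_Int[OF inj]) auto
    then show ?thesis using AB by simp
  qed
  show "f ` A \<subseteq> sq m - {ctr m}" using im cA by blast
  show "f ` B \<subseteq> sq m - {ctr m}" using im cB by blast
  fix x assume "x \<in> sq m - {ctr m}"
  then show "x \<in> f ` A \<longleftrightarrow> x \<notin> f ` B" using im dis fy by blast
qed

end

context mctx begin

lemma tinv_O: "x \<in> sq m - {ctr m} \<Longrightarrow> tinv m x \<in> sq m - {ctr m}"
  using tinv_sq[of x] tinv_ctr_iff[of x] by auto
lemma tau_O: "x \<in> sq m - {ctr m} \<Longrightarrow> tau m x \<in> sq m - {ctr m}"
  using tau_sq[of x] tau_ctr_iff[of x] by auto

lemma ctr_notin_tau: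
  assumes a: "X \<subseteq> sq m" "ctr m \<notin> X" shows "ctr m \<notin> tau m ` X"
proof
  assume "ctr m \<in> tau m ` X"
  then obtain p where p: "p \<in> X" "tau m p = ctr m" by auto
  then have "p = ctr m" using tau_ctr_iff[of p] a(1) by auto
  then show False using a p by simp
qed

lemma ctr_notin_img:
  assumes "\<And>y. y \<in> A \<Longrightarrow> fst (f y) \<noteq> mid m" shows "ctr m \<notin> f ` A"
proof
  assume "ctr m \<in> f ` A"
  then obtain y where "y \<in> A" "f y = ctr m" by auto
  then show False using assms[of y] by (simp add: ctr_def)
qed

lemma forward:
  assumes tl: "triple_labeling m J" and c: "cond m J"
  shows "valid m (Jc J 1 ` V m 3) \<and> bij_betw (Jc J 1) (V m 3) (Jc J 1 ` V m 3) \<and>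
     bij_betw (Jc J 2) (V m 1) (Jc J 1 ` V m 3) \<and> bij_betw (Jc J 3) (V m 2) (Jc J 1 ` V m 3) \<and> J y0 = ctrlab m"
proof -
  define S where "S = Jc J 1 ` V m 3"
  define T where "T = Jc J 2 ` V m 1"
  define U where "U = Jc J 3 ` V m 2"
  define Os where "Os = sq m - {ctr m}"
  have sqH: "y \<in> Hk m \<Longrightarrow> Jc J k y \<in> sq m" for y k by (rule jc_sq[OF tl])
  have e3: "Jc J 2 y = tau m (Jc J 1 y) \<and> Jc J 3 y = (bar m (fst (Jc J 1 y)), fst (Jc J 1 y))" if "y \<in> V m 3" for y
    using Jc_lab3[where J=J and y=y and p="Jc J 1 y", OF lab_V3[OF tl c that]] by simp
  have e1: "Jc J 3 y = tau m (Jc J 2 y) \<and> Jc J 1 y = (bar m (fst (Jc J 2 y)), fst (Jc J 2 y))" if "y \<in> V m 1" for y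
    using Jc_lab1[where J=J and y=y and p="Jc J 2 y", OF lab_V1[OF tl c that]] by simp
  have e2: "Jc J 1 y = tau m (Jc J 3 y) \<and> Jc J 2 y = (bar m (fst (Jc J 3 y)), fst (Jc J 3 y))" if "y \<in> V m 2" for y
    using Jc_lab2[where J=J and y=y and p="Jc J 3 y", OF lab_V2[OF tl c that]] by simp
  have fstm: "fst (Jc J k y) \<in> {1..m}" if "y \<in> Hk m" for k y
    using sqH[OF that, of k] unfolding sq_def by (simp add: mem_Times_iff)
  have VH: "y \<in> V m k \<Longrightarrow> y \<in> Hk m" for y k using V_sub by blast
  have nm3: "fst (Jc J 1 y) \<noteq> mid m" if y: "y \<in> V m 3" for y
  proof -
    have "fst (Jc J 3 y) \<noteq> mid m" using no_mid[OF c _ y] by simp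
    then have "bar m (fst (Jc J 1 y)) \<noteq> mid m" using e3[OF y] by simp
    then show ?thesis using bar_mid by auto
  qed
  have nm1: "fst (Jc J 2 y) \<noteq> mid m" if y: "y \<in> V m 1" for y
  proof -
    have "fst (Jc J 1 y) \<noteq> mid m" using no_mid[OF c _ y] by simp
    then have "bar m (fst (Jc J 2 y)) \<noteq> mid m" using e1[OF y] by simp
    then show ?thesis using bar_mid by auto
  qed
  have nm2: "fst (Jc J 3 y) \<noteq> mid m" if y: "y \<in> V m 2" for y
  proof -
    have "fst (Jc J 2 y) \<noteq> mid m" using no_mid[OF c _ y] by simp
    then have "bar m (fst (Jc J 3 y)) \<noteq> mid m" using e2[OF y] by simp
    then show ?thesis using bar_mid by auto
  qed
  have Ssq: "S \<subseteq> sq m" unfolding S_def using sqH VH by blast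
  have Tsq: "T \<subseteq> sq m" unfolding T_def using sqH VH by blast
  have Usq: "U \<subseteq> sq m" unfolding U_def using sqH VH by blast
  have cS: "ctr m \<notin> S" unfolding S_def by (rule ctr_notin_img[OF nm3])
  have cT: "ctr m \<notin> T" unfolding T_def by (rule ctr_notin_img[OF nm1])
  have cU: "ctr m \<notin> U" unfolding U_def by (rule ctr_notin_img[OF nm2])
  have i12: "Jc J 1 ` V m 2 = tau m ` U" unfolding U_def image_image using e2 by (intro image_cong) auto
  have i23: "Jc J 2 ` V m 3 = tau m ` S" unfolding S_def image_image using e3 by (intro image_cong) auto
  have i31: "Jc J 3 ` V m 1 = tau m ` T" unfolding T_def image_image using e1 by (intro image_cong) auto
  have b10: "bij_betw (Jc J 1) (bigblock m 1) (sq m)" by (rule cond_bij[OF c]) simp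
  have b1: "bij_betw (Jc J 1) (V m 2 \<union> V m 3 \<union> {y0}) (sq m)" using b10 unfolding bb1 .
  have b20: "bij_betw (Jc J 2) (bigblock m 2) (sq m)" by (rule cond_bij[OF c]) simp
  have b2: "bij_betw (Jc J 2) (V m 3 \<union> V m 1 \<union> {y0}) (sq m)" using b20 unfolding bb2 .
  have b30: "bij_betw (Jc J 3) (bigblock m 3) (sq m)" by (rule cond_bij[OF c]) simp
  have b3: "bij_betw (Jc J 3) (V m 1 \<union> V m 2 \<union> {y0}) (sq m)" using b30 unfolding bb3 .
  have cA1: "ctr m \<notin> Jc J 1 ` V m 2" unfolding i12 by (rule ctr_notin_tau[OF Usq cU])
  have cB1: "ctr m \<notin> Jc J 1 ` V m 3" using cS unfolding S_def .
  have cA2: "ctr m \<notin> Jc J 2 ` V m 3" unfolding i23 by (rule ctr_notin_tau[OF Ssq cS])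
  have cB2: "ctr m \<notin> Jc J 2 ` V m 1" using cT unfolding T_def .
  have cA3: "ctr m \<notin> Jc J 3 ` V m 1" unfolding i31 by (rule ctr_notin_tau[OF Tsq cT])
  have cB3: "ctr m \<notin> Jc J 3 ` V m 2" using cU unfolding U_def .
  have V31: "V m 3 \<inter> V m 1 = {}" using V13 by blast
  note q1 = part[OF b1 V23 y0_notin y0_notin cA1 cB1]
  note q2 = part[OF b2 V31 y0_notin y0_notin cA2 cB2]
  note q3 = part[OF b3 V12 y0_notin y0_notin cA3 cB3]
  have p1: "Jc J 1 y0 = ctr m" "\<And>x. x \<in> Os \<Longrightarrow> x \<in> tau m ` U \<longleftrightarrow> x \<notin> S" "S \<subseteq> Os"
    using q1 unfolding i12 S_def[symmetric] Os_def[symmetric] by blast+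
  have p2: "Jc J 2 y0 = ctr m" "\<And>x. x \<in> Os \<Longrightarrow> x \<in> tau m ` S \<longleftrightarrow> x \<notin> T" "T \<subseteq> Os"
    using q2 unfolding i23 T_def[symmetric] Os_def[symmetric] by blast+
  have p3: "Jc J 3 y0 = ctr m" "\<And>x. x \<in> Os \<Longrightarrow> x \<in> tau m ` T \<longleftrightarrow> x \<notin> U" "U \<subseteq> Os"
    using q3 unfolding i31 U_def[symmetric] Os_def[symmetric] by blast+
  have SO: "S \<subseteq> Os" by (rule p1(3))
  have TO: "T \<subseteq> Os" by (rule p2(3))
  have UO: "U \<subseteq> Os" by (rule p3(3))
  have key: "x \<in> S \<longleftrightarrow> tau m x \<notin> S" if x: "x \<in> Os" for x
  proof -
    have xs: "x \<in> sq m" using x Os_def by simp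
    have t1: "tinv m x \<in> Os" using tinv_O x Os_def by simp
    have t2: "tinv m (tinv m x) \<in> Os" using tinv_O t1 Os_def by simp
    have "x \<in> S \<longleftrightarrow> x \<notin> tau m ` U" using p1(2)[OF x] by blast
    also have "\<dots> \<longleftrightarrow> tinv m x \<notin> U" using in_tau_img[OF Usq xs] by simp
    also have "\<dots> \<longleftrightarrow> tinv m x \<in> tau m ` T" using p3(2)[OF t1] by blast
    also have "\<dots> \<longleftrightarrow> tinv m (tinv m x) \<in> T" using in_tau_img[OF Tsq] t1 Os_def by simp
    also have "\<dots> \<longleftrightarrow> tinv m (tinv m x) \<notin> tau m ` S" using p2(2)[OF t2] by blast
    also have "\<dots> \<longleftrightarrow> tinv m (tinv m (tinv m x)) \<notin> S" using in_tau_img[OF Ssq] t2 Os_def by simp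
    also have "\<dots> \<longleftrightarrow> tau m x \<notin> S" using tinv3[OF xs] by simp
    finally show ?thesis .
  qed
  have tauS: "tau m ` S = Os - S"
  proof (rule equalityI; rule subsetI)
    fix y assume "y \<in> tau m ` S"
    then obtain z where z: "z \<in> S" "y = tau m z" by blast
    then have zO: "z \<in> Os" using SO by blast
    have "tau m z \<notin> S" using key[OF zO] z(1) by blast
    moreover have "tau m z \<in> Os" using tau_O[of z] zO unfolding Os_def by blast
    ultimately show "y \<in> Os - S" using z(2) by blast
  next
    fix y assume y: "y \<in> Os - S"
    then have yO: "y \<in> Os" and ys: "y \<in> sq m" unfolding Os_def by blast+
    have tO: "tinv m y \<in> Os" using tinv_O yO Os_def by simp
    have "tinv m y \<in> S" using key[OF tO] tau_tinv[OF ys] y by simp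
    then show "y \<in> tau m ` S" using in_tau_img[OF Ssq ys] by simp
  qed
  have TS: "T = S"
  proof (rule equalityI; rule subsetI)
    fix x assume xT: "x \<in> T"
    then have xO: "x \<in> Os" using TO by blast
    then have xs: "x \<in> sq m" using Os_def by simp
    have tO: "tinv m x \<in> Os" using tinv_O xO Os_def by simp
    have "x \<notin> tau m ` S" using p2(2)[OF xO] xT by blast
    then have "tinv m x \<notin> S" using in_tau_img[OF Ssq xs] by simp
    then show "x \<in> S" using key[OF tO] tau_tinv[OF xs] by simp
  next
    fix x assume xS: "x \<in> S"
    then have xO: "x \<in> Os" using SO by blast
    then have xs: "x \<in> sq m" using Os_def by simp
    have tO: "tinv m x \<in> Os" using tinv_O xO Os_def by simp
    have "tinv m x \<notin> S" using key[OF tO] tau_tinv[OF xs] xS by simp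
    then have "x \<notin> tau m ` S" using in_tau_img[OF Ssq xs] by simp
    then show "x \<in> T" using p2(2)[OF xO] by blast
  qed
  have US: "U = S"
  proof (rule equalityI; rule subsetI)
    fix x assume xU: "x \<in> U"
    then have xO: "x \<in> Os" using UO by blast
    have "x \<notin> tau m ` T" using p3(2)[OF xO] xU by blast
    then have "x \<notin> Os - S" using tauS TS by simp
    then show "x \<in> S" using xO by blast
  next
    fix x assume xS: "x \<in> S"
    then have xO: "x \<in> Os" using SO by blast
    have "x \<notin> tau m ` T" using tauS TS xS by simp
    then show "x \<in> U" using p3(2)[OF xO] by blast
  qed
  have inj1: "inj_on (Jc J 1) (V m 3)" using bij_betw_imp_inj_on[OF b1] by (rule inj_on_subset) auto
  have inj2: "inj_on (Jc J 2) (V m 1)" using bij_betw_imp_inj_on[OF b2] by (rule inj_on_subset) auto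
  have inj3: "inj_on (Jc J 3) (V m 2)" using bij_betw_imp_inj_on[OF b3] by (rule inj_on_subset) auto
  have bS1: "bij_betw (Jc J 1) (V m 3) S" using inj1 S_def by (simp add: bij_betw_def)
  have bS2: "bij_betw (Jc J 2) (V m 1) S" using inj2 T_def TS by (simp add: bij_betw_def)
  have bS3: "bij_betw (Jc J 3) (V m 2) S" using inj3 U_def US by (simp add: bij_betw_def)
  have y0c: "J y0 = ctrlab m"
    using J_eq_Jc[of J y0] p1(1) p2(1) p3(1) by (simp add: ctrlab_def)
  have cardS: "card S = kap m" using card_image[OF inj1] card_V[of 3] S_def by simp
  have rows: "card {j. (i, j) \<in> S} = nat \<bar>int i - int (bar m i)\<bar>" if i: "i \<in> {1..m}" for i
  proof -
    have "card {j. (i, j) \<in> S} = card {p\<in>S. fst p = i}"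
    proof -
      have "{p\<in>S. fst p = i} = Pair i ` {j. (i, j) \<in> S}" by force
      moreover have "inj (Pair i)" by (simp add: inj_on_def)
      ultimately show ?thesis using card_image[of "Pair i" "{j. (i, j) \<in> S}"] by (simp add: inj_on_def)
    qed
    also have "{p\<in>S. fst p = i} = Jc J 1 ` {y\<in>V m 3. fst (Jc J 1 y) = i}" unfolding S_def by blast
    also have "card \<dots> = card {y\<in>V m 3. fst (Jc J 1 y) = i}"
      by (rule card_image) (rule inj_on_subset[OF inj1], blast)
    also have "{y\<in>V m 3. fst (Jc J 1 y) = i} = {y\<in>V m 3. fst (Jc J 3 y) = bar m i}"
    proof (intro Collect_cong conj_cong refl)
      fix y assume y: "y \<in> V m 3"
      have "fst (Jc J 1 y) \<in> {1..m}" using fstm VH[OF y] by blast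
      then show "fst (Jc J 1 y) = i \<longleftrightarrow> fst (Jc J 3 y) = bar m i"
        using e3[OF y] bar_eq[OF _ i] by simp
    qed
    also have "card \<dots> = nat \<bar>int (bar m i) - int (bar m (bar m i))\<bar>"
      using cond_count[OF c _ bar_in[OF i], of 3] by simp
    also have "\<dots> = nat \<bar>int i - int (bar m i)\<bar>" using bar_bar[OF i] by simp
    finally show ?thesis .
  qed
  have "valid m S" unfolding valid_def iota_def Om_eq using SO Os_def tauS cardS rows by blast
  then show ?thesis using bS1 bS2 bS3 y0c S_def by simp
qed

end

lemma condI:
  assumes "\<And>k. k \<in> {1,2,3} \<Longrightarrow> bij_betw (Jc J k) (bigblock m k) (sq m)"
    and "\<And>k y. k \<in> {1,2,3} \<Longrightarrow> y \<in> V m k \<Longrightarrow> antid m (Jc J k y)"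
    and "\<And>k i. k \<in> {1,2,3} \<Longrightarrow> i \<in> {1..m} \<Longrightarrow> card {y\<in>V m k. fst (Jc J k y) = i} = nat \<bar>int i - int (bar m i)\<bar>"
  shows "cond m J"
  unfolding cond_def using assms by blast

context mctx begin

lemma valid_facts:
  assumes v: "valid m S"
  shows "S \<subseteq> sq m - {ctr m}" "tau m ` S = sq m - {ctr m} - S" "card S = kap m" "finite S"
    "\<And>i. i \<in> {1..m} \<Longrightarrow> card {j. (i, j) \<in> S} = nat \<bar>int i - int (bar m i)\<bar>"
proof -
  show SO: "S \<subseteq> sq m - {ctr m}" using v unfolding valid_def Om_eq by blast
  show "tau m ` S = sq m - {ctr m} - S" using v unfolding valid_def Om_eq iota_def by blast
  show "card S = kap m" using v unfolding valid_def by blast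
  show "finite S" using SO finite_subset by (auto simp: sq_def intro: finite_subset[OF _ finite_SigmaI])
  fix i assume "i \<in> {1..m}" then show "card {j. (i, j) \<in> S} = nat \<bar>int i - int (bar m i)\<bar>"
    using v unfolding valid_def by blast
qed

lemma tau_comp_bij:
  assumes g: "bij_betw g A S" and S: "S \<subseteq> sq m"
  shows "bij_betw (\<lambda>y. tau m (g y)) A (tau m ` S)"
proof -
  have "bij_betw (tau m) S (tau m ` S)" by (rule inj_on_imp_bij_betw[OF inj_on_subset[OF tau_inj S]])
  from bij_betw_trans[OF g this] show ?thesis by (simp add: comp_def)
qed

lemma assemble:
  assumes fA: "bij_betw f A (tau m ` S)" and fB: "bij_betw f B S" and AB: "A \<inter> B = {}"
    and yA: "y0 \<notin> A" and yB: "y0 \<notin> B" and fy: "f y0 = ctr m"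
    and tS: "tau m ` S = sq m - {ctr m} - S" and SO: "S \<subseteq> sq m - {ctr m}"
  shows "bij_betw f (A \<union> B \<union> {y0}) (sq m)"
proof -
  have 1: "bij_betw f (A \<union> B) (tau m ` S \<union> S)"
    by (rule bij_betw_combine[OF fA fB]) (use tS in blast)
  have 2: "bij_betw f {y0} {ctr m}" using fy by simp
  have 3: "bij_betw f (A \<union> B \<union> {y0}) (tau m ` S \<union> S \<union> {ctr m})"
    by (rule bij_betw_combine[OF 1 2]) (use tS SO in blast)
  have "tau m ` S \<union> S \<union> {ctr m} = sq m" using tS SO ctr_sq by blast
  then show ?thesis using 3 by simp
qed

lemma count_g:
  assumes g: "bij_betw g A S" and v: "valid m S" and i: "i \<in> {1..m}"
  shows "card {y\<in>A. bar m (fst (g y)) = i} = nat \<bar>int i - int (bar m i)\<bar>"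
proof -
  note vf = valid_facts[OF v]
  have inj: "inj_on g A" using g by (simp add: bij_betw_def)
  have "card {y\<in>A. bar m (fst (g y)) = i} = card (g ` {y\<in>A. bar m (fst (g y)) = i})"
    by (rule card_image[symmetric]) (rule inj_on_subset[OF inj], blast)
  also have "g ` {y\<in>A. bar m (fst (g y)) = i} = {p\<in>S. bar m (fst p) = i}"
    using g by (auto simp: bij_betw_def)
  also have "\<dots> = {p\<in>S. fst p = bar m i}"
  proof (intro Collect_cong conj_cong refl)
    fix p assume "p \<in> S"
    then have "fst p \<in> {1..m}" using vf(1) by (auto simp: sq_def)
    then show "bar m (fst p) = i \<longleftrightarrow> fst p = bar m i" using bar_bar i by auto
  qed
  also have "\<dots> = Pair (bar m i) ` {j. (bar m i, j) \<in> S}" by force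
  also have "card \<dots> = card {j. (bar m i, j) \<in> S}" by (rule card_image) (simp add: inj_on_def)
  also have "\<dots> = nat \<bar>int (bar m i) - int (bar m (bar m i))\<bar>" using vf(5)[OF bar_in[OF i]] .
  also have "\<dots> = nat \<bar>int i - int (bar m i)\<bar>" using bar_bar[OF i] by simp
  finally show ?thesis .
qed

lemma converse:
  assumes v: "valid m S"
  shows "\<exists>J. triple_labeling m J \<and> cond m J \<and> Jc J 1 ` V m 3 = S"
proof -
  note vf = valid_facts[OF v]
  have Ssq: "S \<subseteq> sq m" using vf(1) by blast
  have ex: "\<exists>g. bij_betw g (V m k) S" if "k \<in> {1,2,3}" for k
    by (rule finite_same_card_bij) (use finite_V vf card_V[OF that] in auto)
  obtain g1 where g1: "bij_betw g1 (V m 1) S" using ex by blast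
  obtain g2 where g2: "bij_betw g2 (V m 2) S" using ex by blast
  obtain g3 where g3: "bij_betw g3 (V m 3) S" using ex by blast
  define J where "J y = (if y \<in> V m 1 then lab1 m (g1 y) else if y \<in> V m 2 then lab2 m (g2 y)
      else if y \<in> V m 3 then lab3 m (g3 y) else ctrlab m)" for y
  have J1: "J y = lab1 m (g1 y)" if "y \<in> V m 1" for y using that by (simp add: J_def)
  have J2: "J y = lab2 m (g2 y)" if "y \<in> V m 2" for y using that V12 by (auto simp: J_def)
  have J3: "J y = lab3 m (g3 y)" if "y \<in> V m 3" for y using that V13 V23 by (auto simp: J_def)
  have J0: "J y0 = ctrlab m" using y0_notin by (simp add: J_def)
  note c1 = Jc_lab1[where J=J, OF J1] and c2 = Jc_lab2[where J=J, OF J2] and c3 = Jc_lab3[where J=J, OF J3]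
  have c0: "Jc J k y0 = ctr m" for k using J0 by (simp add: Jc_def ctrlab_def)
  have gS1: "g1 y \<in> S" if "y \<in> V m 1" for y using g1 that by (auto simp: bij_betw_def)
  have gS2: "g2 y \<in> S" if "y \<in> V m 2" for y using g2 that by (auto simp: bij_betw_def)
  have gS3: "g3 y \<in> S" if "y \<in> V m 3" for y using g3 that by (auto simp: bij_betw_def)
  have inS: "fst p \<in> {1..m} \<and> snd p \<in> {1..m}" if "p \<in> S" for p using that Ssq by (auto simp: sq_def)
  have tl: "triple_labeling m J"
    unfolding triple_labeling_def
  proof
    fix y assume "y \<in> Hk m"
    then have "y \<in> V m 1 \<or> y \<in> V m 2 \<or> y \<in> V m 3 \<or> y = y0" using Hk_eq by blast
    then show "\<exists>i\<in>{1..m}. \<exists>j\<in>{1..m}. \<exists>l\<in>{1..m}. J y = ((i, j), (j, l), (l, i))"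
    proof (elim disjE)
      assume y: "y \<in> V m 1"
      obtain a b where ab: "g1 y = (a, b)" by fastforce
      have "a \<in> {1..m}" "b \<in> {1..m}" using inS[OF gS1[OF y]] ab by auto
      then show ?thesis using J1[OF y] ab bar_in by (auto simp: lab1_def)
    next
      assume y: "y \<in> V m 2"
      obtain a b where ab: "g2 y = (a, b)" by fastforce
      have "a \<in> {1..m}" "b \<in> {1..m}" using inS[OF gS2[OF y]] ab by auto
      then show ?thesis using J2[OF y] ab bar_in by (auto simp: lab2_def)
    next
      assume y: "y \<in> V m 3"
      obtain a b where ab: "g3 y = (a, b)" by fastforce
      have "a \<in> {1..m}" "b \<in> {1..m}" using inS[OF gS3[OF y]] ab by auto
      then show ?thesis using J3[OF y] ab bar_in by (auto simp: lab3_def)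
    next
      assume "y = y0"
      then show ?thesis using J0 mid_in by (auto simp: ctrlab_def ctr_def)
    qed
  qed
  have b1: "bij_betw (Jc J 1) (bigblock m 1) (sq m)"
  proof -
    have A: "bij_betw (Jc J 1) (V m 2) (tau m ` S)"
      using tau_comp_bij[OF g2 Ssq] by (rule bij_betw_cong[THEN iffD1, rotated]) (use c2 in auto)
    have B: "bij_betw (Jc J 1) (V m 3) S"
      using g3 by (rule bij_betw_cong[THEN iffD1, rotated]) (use c3 in auto)
    show ?thesis unfolding bb1 by (rule assemble[OF A B V23 y0_notin y0_notin c0 vf(2) vf(1)])
  qed
  have b2: "bij_betw (Jc J 2) (bigblock m 2) (sq m)"
  proof -
    have A: "bij_betw (Jc J 2) (V m 3) (tau m ` S)"
      using tau_comp_bij[OF g3 Ssq] by (rule bij_betw_cong[THEN iffD1, rotated]) (use c3 in auto)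
    have B: "bij_betw (Jc J 2) (V m 1) S"
      using g1 by (rule bij_betw_cong[THEN iffD1, rotated]) (use c1 in auto)
    have V31: "V m 3 \<inter> V m 1 = {}" using V13 by blast
    show ?thesis unfolding bb2 by (rule assemble[OF A B V31 y0_notin y0_notin c0 vf(2) vf(1)])
  qed
  have b3: "bij_betw (Jc J 3) (bigblock m 3) (sq m)"
  proof -
    have A: "bij_betw (Jc J 3) (V m 1) (tau m ` S)"
      using tau_comp_bij[OF g1 Ssq] by (rule bij_betw_cong[THEN iffD1, rotated]) (use c1 in auto)
    have B: "bij_betw (Jc J 3) (V m 2) S"
      using g2 by (rule bij_betw_cong[THEN iffD1, rotated]) (use c2 in auto)
    show ?thesis unfolding bb3 by (rule assemble[OF A B V12 y0_notin y0_notin c0 vf(2) vf(1)])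
  qed
  have ad: "antid m (bar m (fst p), fst p)" if "p \<in> S" for p
    using inS[OF that] bar_bar by (simp add: antid_def)
  have cnt: "card {y\<in>V m k. fst (Jc J k y) = i} = nat \<bar>int i - int (bar m i)\<bar>"
    if k: "k \<in> {1,2,3}" and i: "i \<in> {1..m}" for k i
  proof -
    consider "k = 1" | "k = 2" | "k = 3" using k by blast
    then show ?thesis
    proof cases
      case 1
      have "{y\<in>V m k. fst (Jc J k y) = i} = {y\<in>V m 1. bar m (fst (g1 y)) = i}" using c1 1 by auto
      then show ?thesis using count_g[OF g1 v i] by simp
    next
      case 2
      have "{y\<in>V m k. fst (Jc J k y) = i} = {y\<in>V m 2. bar m (fst (g2 y)) = i}" using c2 2 by auto
      then show ?thesis using count_g[OF g2 v i] by simp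
    next
      case 3
      have "{y\<in>V m k. fst (Jc J k y) = i} = {y\<in>V m 3. bar m (fst (g3 y)) = i}" using c3 3 by auto
      then show ?thesis using count_g[OF g3 v i] by simp
    qed
  qed
  have cd: "cond m J"
  proof (rule condI)
    fix k assume "k \<in> {1,2,3::nat}"
    then show "bij_betw (Jc J k) (bigblock m k) (sq m)" using b1 b2 b3 by auto
  next
    fix k y assume k: "k \<in> {1,2,3::nat}" and y: "y \<in> V m k"
    consider "k = 1" | "k = 2" | "k = 3" using k by blast
    then show "antid m (Jc J k y)"
    proof cases
      case 1 then show ?thesis using c1[of y] ad[OF gS1] y by simp
    next
      case 2 then show ?thesis using c2[of y] ad[OF gS2] y by simp
    next
      case 3 then show ?thesis using c3[of y] ad[OF gS3] y by simp
    qed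
  next
    fix k i assume "k \<in> {1,2,3::nat}" "i \<in> {1..m}"
    then show "card {y\<in>V m k. fst (Jc J k y) = i} = nat \<bar>int i - int (bar m i)\<bar>" by (rule cnt)
  qed
  have "Jc J 1 ` V m 3 = g3 ` V m 3" using c3 by (intro image_cong) auto
  also have "\<dots> = S" using g3 by (simp add: bij_betw_def)
  finally show ?thesis using tl cd by blast
qed

end

context mctx begin

lemma piece_bij:
  assumes f: "bij_betw f A S" and f': "bij_betw f' A S"
  shows "bij_betw (\<lambda>y. inv_into A f (f' y)) A A" "\<And>y. y \<in> A \<Longrightarrow> f (inv_into A f (f' y)) = f' y"
proof -
  show "bij_betw (\<lambda>y. inv_into A f (f' y)) A A"
    using bij_betw_trans[OF f' bij_betw_inv_into[OF f]] by (simp add: comp_def)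
  fix y assume "y \<in> A"
  then have "f' y \<in> S" using f' by (auto simp: bij_betw_def)
  then show "f (inv_into A f (f' y)) = f' y" using f by (simp add: bij_betw_inv_into_right)
qed

lemma uniq1:
  assumes tl: "triple_labeling m J" and c: "cond m J" and tl': "triple_labeling m J'" and c': "cond m J'"
    and eq: "Jc J' 1 ` V m 3 = Jc J 1 ` V m 3"
  shows "\<exists>\<sigma>. bij_betw \<sigma> (Hk m) (Hk m) \<and> (\<forall>k\<in>{1,2,3}. \<sigma> ` V m k = V m k) \<and> (\<forall>y\<in>Hk m. J' y = J (\<sigma> y))"
proof -
  define S where "S = Jc J 1 ` V m 3"
  note F = forward[OF tl c, folded S_def]
  note F' = forward[OF tl' c', unfolded eq, folded S_def]
  define s1 where "s1 y = inv_into (V m 1) (Jc J 2) (Jc J' 2 y)" for y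
  define s2 where "s2 y = inv_into (V m 2) (Jc J 3) (Jc J' 3 y)" for y
  define s3 where "s3 y = inv_into (V m 3) (Jc J 1) (Jc J' 1 y)" for y
  have P1: "bij_betw s1 (V m 1) (V m 1)" "\<And>y. y \<in> V m 1 \<Longrightarrow> Jc J 2 (s1 y) = Jc J' 2 y"
    unfolding s1_def using piece_bij[of "Jc J 2" "V m 1" S "Jc J' 2"] F F' by blast+
  have P2: "bij_betw s2 (V m 2) (V m 2)" "\<And>y. y \<in> V m 2 \<Longrightarrow> Jc J 3 (s2 y) = Jc J' 3 y"
    unfolding s2_def using piece_bij[of "Jc J 3" "V m 2" S "Jc J' 3"] F F' by blast+
  have P3: "bij_betw s3 (V m 3) (V m 3)" "\<And>y. y \<in> V m 3 \<Longrightarrow> Jc J 1 (s3 y) = Jc J' 1 y"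
    unfolding s3_def using piece_bij[of "Jc J 1" "V m 3" S "Jc J' 1"] F F' by blast+
  define \<sigma> where "\<sigma> y = (if y \<in> V m 1 then s1 y else if y \<in> V m 2 then s2 y else if y \<in> V m 3 then s3 y else y)" for y
  have s1e: "\<sigma> y = s1 y" if "y \<in> V m 1" for y using that by (simp add: \<sigma>_def)
  have s2e: "\<sigma> y = s2 y" if "y \<in> V m 2" for y using that V12 by (auto simp: \<sigma>_def)
  have s3e: "\<sigma> y = s3 y" if "y \<in> V m 3" for y using that V13 V23 by (auto simp: \<sigma>_def)
  have s0e: "\<sigma> y0 = y0" using y0_notin by (simp add: \<sigma>_def)
  have B1: "bij_betw \<sigma> (V m 1) (V m 1)" using P1(1) by (rule bij_betw_cong[THEN iffD1, rotated]) (use s1e in auto)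
  have B2: "bij_betw \<sigma> (V m 2) (V m 2)" using P2(1) by (rule bij_betw_cong[THEN iffD1, rotated]) (use s2e in auto)
  have B3: "bij_betw \<sigma> (V m 3) (V m 3)" using P3(1) by (rule bij_betw_cong[THEN iffD1, rotated]) (use s3e in auto)
  have B0: "bij_betw \<sigma> {y0} {y0}" using s0e by simp
  have B12: "bij_betw \<sigma> (V m 1 \<union> V m 2) (V m 1 \<union> V m 2)" by (rule bij_betw_combine[OF B1 B2 V12])
  have B123: "bij_betw \<sigma> (V m 1 \<union> V m 2 \<union> V m 3) (V m 1 \<union> V m 2 \<union> V m 3)"
    by (rule bij_betw_combine[OF B12 B3]) (use V13 V23 in blast)
  have BH: "bij_betw \<sigma> (Hk m) (Hk m)" unfolding Hk_eq
    by (rule bij_betw_combine[OF B123 B0]) (use y0_notin in blast)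
  have im: "\<forall>k\<in>{1,2,3}. \<sigma> ` V m k = V m k"
    using B1 B2 B3 by (auto simp: bij_betw_def)
  have JJ: "J' y = J (\<sigma> y)" if y: "y \<in> Hk m" for y
  proof -
    have "y \<in> V m 1 \<or> y \<in> V m 2 \<or> y \<in> V m 3 \<or> y = y0" using y Hk_eq by blast
    then show ?thesis
    proof (elim disjE)
      assume y: "y \<in> V m 1"
      have sy: "\<sigma> y \<in> V m 1" using B1 y by (auto simp: bij_betw_def)
      show ?thesis using lab_V1[OF tl' c' y] lab_V1[OF tl c sy] s1e[OF y] P1(2)[OF y] by simp
    next
      assume y: "y \<in> V m 2"
      have sy: "\<sigma> y \<in> V m 2" using B2 y by (auto simp: bij_betw_def)
      show ?thesis using lab_V2[OF tl' c' y] lab_V2[OF tl c sy] s2e[OF y] P2(2)[OF y] by simp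
    next
      assume y: "y \<in> V m 3"
      have sy: "\<sigma> y \<in> V m 3" using B3 y by (auto simp: bij_betw_def)
      show ?thesis using lab_V3[OF tl' c' y] lab_V3[OF tl c sy] s3e[OF y] P3(2)[OF y] by simp
    next
      assume "y = y0"
      then show ?thesis using F F' s0e by simp
    qed
  qed
  show ?thesis using BH im JJ by blast
qed

lemma img_coll: "f ` {y\<in>A. P (f y)} = {z\<in>f ` A. P z}" by auto

lemma uniq2:
  assumes tl: "triple_labeling m J" and c: "cond m J"
    and b: "bij_betw \<sigma> (Hk m) (Hk m)" and im: "\<forall>k\<in>{1,2,3}. \<sigma> ` V m k = V m k"
    and JJ: "\<forall>y\<in>Hk m. J' y = J (\<sigma> y)"
  shows "triple_labeling m J' \<and> cond m J' \<and> Jc J' 1 ` V m 3 = Jc J 1 ` V m 3"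
proof -
  have inj: "inj_on \<sigma> (Hk m)" using b by (simp add: bij_betw_def)
  have sH: "\<sigma> y \<in> Hk m" if "y \<in> Hk m" for y using b that by (auto simp: bij_betw_def)
  have imk: "\<sigma> ` V m k = V m k" if "k \<in> {1,2,3}" for k using im that by blast
  have s0: "\<sigma> y0 = y0"
  proof (rule ccontr)
    assume ne: "\<sigma> y0 \<noteq> y0"
    have "\<sigma> y0 \<in> V m 1 \<union> V m 2 \<union> V m 3" using sH[OF y0_Hk] Hk_eq ne by blast
    then obtain k where k: "k \<in> {1,2,3}" "\<sigma> y0 \<in> V m k" by blast
    then obtain z where z: "z \<in> V m k" "\<sigma> z = \<sigma> y0" using imk[OF k(1)] by (metis imageE)
    have "z = y0" using inj_onD[OF inj z(2)] z(1) V_sub y0_Hk by blast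
    then show False using z(1) y0_notin by simp
  qed
  have Jc': "Jc J' k y = Jc J k (\<sigma> y)" if "y \<in> Hk m" for k y using JJ that by (simp add: Jc_def)
  have tl': "triple_labeling m J'"
    unfolding triple_labeling_def using JJ sH tl unfolding triple_labeling_def by metis
  have bb: "\<sigma> ` bigblock m k = bigblock m k" if k: "k \<in> {1,2,3}" for k
  proof -
    have "nxt k \<in> {1,2,3}" "nxt (nxt k) \<in> {1,2,3}" by (simp_all add: nxt_def) presburger+
    then show ?thesis unfolding bigblock_def image_Un using imk s0 by simp
  qed
  have bbb: "bij_betw \<sigma> (bigblock m k) (bigblock m k)" if k: "k \<in> {1,2,3}" for k
    using inj_on_subset[OF inj bb_sub] bb[OF k] by (simp add: bij_betw_def)
  have cnt: "card {y\<in>V m k. fst (Jc J' k y) = i} = card {z\<in>V m k. fst (Jc J k z) = i}" if k: "k \<in> {1,2,3}" for k i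
  proof -
    have "{y\<in>V m k. fst (Jc J' k y) = i} = {y\<in>V m k. fst (Jc J k (\<sigma> y)) = i}"
    proof (intro Collect_cong conj_cong refl)
      fix y assume "y \<in> V m k"
      then have "y \<in> Hk m" using V_sub by blast
      then show "fst (Jc J' k y) = i \<longleftrightarrow> fst (Jc J k (\<sigma> y)) = i" using Jc' by simp
    qed
    moreover have "\<sigma> ` {y\<in>V m k. fst (Jc J k (\<sigma> y)) = i} = {z\<in>V m k. fst (Jc J k z) = i}"
      using img_coll[of \<sigma> "V m k" "\<lambda>z. fst (Jc J k z) = i"] imk[OF k] by simp
    moreover have "inj_on \<sigma> {y\<in>V m k. fst (Jc J k (\<sigma> y)) = i}"
    proof (rule inj_on_subset[OF inj])
      have "{y\<in>V m k. fst (Jc J k (\<sigma> y)) = i} \<subseteq> V m k" by (rule Collect_restrict)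
      then show "{y\<in>V m k. fst (Jc J k (\<sigma> y)) = i} \<subseteq> Hk m" using V_sub[of k] by (rule subset_trans)
    qed
    ultimately show ?thesis using card_image[of \<sigma> "{y\<in>V m k. fst (Jc J k (\<sigma> y)) = i}"] by simp
  qed
  have cd: "cond m J'"
  proof (rule condI)
    fix k assume k: "k \<in> {1,2,3::nat}"
    have "bij_betw (\<lambda>y. Jc J k (\<sigma> y)) (bigblock m k) (sq m)"
      using bij_betw_trans[OF bbb[OF k] cond_bij[OF c k]] by (simp add: comp_def)
    then show "bij_betw (Jc J' k) (bigblock m k) (sq m)"
    proof (rule bij_betw_cong[THEN iffD1, rotated])
      show "\<And>y. y \<in> bigblock m k \<Longrightarrow> Jc J k (\<sigma> y) = Jc J' k y"
      proof -
        fix y assume "y \<in> bigblock m k"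
        then have "y \<in> Hk m" using bb_sub by blast
        then show "Jc J k (\<sigma> y) = Jc J' k y" using Jc' by simp
      qed
    qed
  next
    fix k y assume k: "k \<in> {1,2,3::nat}" and y: "y \<in> V m k"
    have "\<sigma> y \<in> V m k" using imk[OF k] y by blast
    moreover have "y \<in> Hk m" using y V_sub by blast
    ultimately show "antid m (Jc J' k y)" using cond_antid[OF c k] Jc' by simp
  next
    fix k i assume k: "k \<in> {1,2,3::nat}" and i: "i \<in> {1..m}"
    show "card {y\<in>V m k. fst (Jc J' k y) = i} = nat \<bar>int i - int (bar m i)\<bar>"
      using cnt[OF k] cond_count[OF c k i] by simp
  qed
  have "Jc J' 1 ` V m 3 = (\<lambda>y. Jc J 1 (\<sigma> y)) ` V m 3"
  proof (rule image_cong[OF refl])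
    fix y assume "y \<in> V m 3"
    then have "y \<in> Hk m" using V_sub by blast
    then show "Jc J' 1 y = Jc J 1 (\<sigma> y)" using Jc' by simp
  qed
  also have "\<dots> = Jc J 1 ` \<sigma> ` V m 3" by (simp add: image_image)
  also have "\<dots> = Jc J 1 ` V m 3" using imk[of 3] by simp
  finally show ?thesis using tl' cd by blast
qed

end

theorem proposition6p5:
  fixes m :: nat and \<phi> :: "nat \<times> nat \<Rightarrow> nat" and hs :: "vtx list"
  assumes "odd m" and "m > 1"
    and "bij_betw \<phi> (Om m) {2..m^2}"
    and "distinct hs" and "set hs = Hk m"
  shows "(\<forall>J. triple_labeling m J \<and> nonzero_labeling m \<phi> hs J \<longrightarrow> valid m (Jc J 1 ` V m 3))
    \<and> (\<forall>S. valid m S \<longrightarrow>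
         (\<exists>J. triple_labeling m J \<and> nonzero_labeling m \<phi> hs J \<and> Jc J 1 ` V m 3 = S \<and>
            (\<forall>J'. (triple_labeling m J' \<and> nonzero_labeling m \<phi> hs J' \<and> Jc J' 1 ` V m 3 = S)
               \<longleftrightarrow> (\<exists>\<sigma>. bij_betw \<sigma> (Hk m) (Hk m) \<and> (\<forall>k\<in>{1,2,3}. \<sigma> ` V m k = V m k) \<and>
                        (\<forall>y\<in>Hk m. J' y = J (\<sigma> y))))))"
proof -
  interpret mctx2 m \<phi> hs using assms by unfold_locales auto
  have A: "\<forall>J. triple_labeling m J \<and> nonzero_labeling m \<phi> hs J \<longrightarrow> valid m (Jc J 1 ` V m 3)"
  proof (intro allI impI)
    fix J assume a: "triple_labeling m J \<and> nonzero_labeling m \<phi> hs J"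
    have t: "triple_labeling m J" using a by (rule conjunct1)
    have "cond m J" using char[OF t] a by (rule iffD1[OF _ conjunct2])
    from forward[OF t this] show "valid m (Jc J 1 ` V m 3)" by (rule conjunct1)
  qed
  have B: "\<exists>J. triple_labeling m J \<and> nonzero_labeling m \<phi> hs J \<and> Jc J 1 ` V m 3 = S \<and>
            (\<forall>J'. (triple_labeling m J' \<and> nonzero_labeling m \<phi> hs J' \<and> Jc J' 1 ` V m 3 = S)
               \<longleftrightarrow> (\<exists>\<sigma>. bij_betw \<sigma> (Hk m) (Hk m) \<and> (\<forall>k\<in>{1,2,3}. \<sigma> ` V m k = V m k) \<and>
                        (\<forall>y\<in>Hk m. J' y = J (\<sigma> y))))" if v: "valid m S" for S
  proof -
    obtain J where J: "triple_labeling m J" "cond m J" "Jc J 1 ` V m 3 = S" using converse[OF v] by blast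
    have nz: "nonzero_labeling m \<phi> hs J" using char[OF J(1)] J(2) by (rule iffD2)
    have "(triple_labeling m J' \<and> nonzero_labeling m \<phi> hs J' \<and> Jc J' 1 ` V m 3 = S)
         \<longleftrightarrow> (\<exists>\<sigma>. bij_betw \<sigma> (Hk m) (Hk m) \<and> (\<forall>k\<in>{1,2,3}. \<sigma> ` V m k = V m k) \<and>
                        (\<forall>y\<in>Hk m. J' y = J (\<sigma> y)))" for J'
    proof
      assume a: "triple_labeling m J' \<and> nonzero_labeling m \<phi> hs J' \<and> Jc J' 1 ` V m 3 = S"
      have t': "triple_labeling m J'" using a by (rule conjunct1)
      have n': "nonzero_labeling m \<phi> hs J'" using a by simp
      have e': "Jc J' 1 ` V m 3 = Jc J 1 ` V m 3" using a J(3) by simp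
      have c': "cond m J'" using char[OF t'] n' by (rule iffD1)
      show "\<exists>\<sigma>. bij_betw \<sigma> (Hk m) (Hk m) \<and> (\<forall>k\<in>{1,2,3}. \<sigma> ` V m k = V m k) \<and> (\<forall>y\<in>Hk m. J' y = J (\<sigma> y))"
        by (rule uniq1[OF J(1) J(2) t' c' e'])
    next
      assume "\<exists>\<sigma>. bij_betw \<sigma> (Hk m) (Hk m) \<and> (\<forall>k\<in>{1,2,3}. \<sigma> ` V m k = V m k) \<and> (\<forall>y\<in>Hk m. J' y = J (\<sigma> y))"
      then obtain \<sigma> where s: "bij_betw \<sigma> (Hk m) (Hk m)" "\<forall>k\<in>{1,2,3}. \<sigma> ` V m k = V m k" "\<forall>y\<in>Hk m. J' y = J (\<sigma> y)"
        by blast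
      have u: "triple_labeling m J' \<and> cond m J' \<and> Jc J' 1 ` V m 3 = Jc J 1 ` V m 3"
        by (rule uniq2[OF J(1) J(2) s(1) s(2) s(3)])
      then show "triple_labeling m J' \<and> nonzero_labeling m \<phi> hs J' \<and> Jc J' 1 ` V m 3 = S"
      proof -
        have t': "triple_labeling m J'" using u by (rule conjunct1)
        have c': "cond m J'" using u by simp
        have "nonzero_labeling m \<phi> hs J'" using char[OF t'] c' by (rule iffD2)
        then show ?thesis using u J(3) by simp
      qed
    qed
    then show ?thesis using J nz by blast
  qed
  show ?thesis using A B by blast
qed

end
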